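(* Let $V$ be a complex vector space of dimension $k$. Let $\mu$ and $\nu$ be partitions with at most $k$ parts, with $\nu$ obtained from $\mu$ by adding one cell. Let $\iota\colon S_\nu V^*\to V^*\otimes S_\mu V^*$ be the $GL(V)$-equivariant inclusion. Let $P\colon S_\mu V^*\otimes V^*\to S_\nu V^*$ be the $GL(V)$-equivariant projection. Let $T'\colon S_\mu V^*\otimes S_\nu V^*\to S_\nu V^*\otimes S_\mu V^*$ be the composition of $$\mathrm{id}\otimes\iota\colon S_\mu V^*\otimes S_\nu V^*\to S_\mu V^*\otimes V^*\otimes S_\mu V^*$$ with $$P\otimes \mathrm{id}\colon S_\mu V^*\otimes V^*\otimes S_\mu V^*\to S_\nu V^*\otimes S_\mu V^*.$$ Suppose the isotypic component with highest weight $\pi$ appears with the same multiplicity $M$ in $S_\mu V^*\otimes S_\nu V^*$ and in $S_\mu V^*\otimes V^*\otimes S_\mu V^*$. Then the isotypic component with highest weight $\pi$ appears in the image of $T'$ with multiplicity $M$.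
   Context: $S_\lambda V$ denotes the irreducible polynomial $GL(V)$-module (Schur module) indexed by the partition $\lambda$. By the Pieri rule, $S_\nu V^*$ occurs with multiplicity one in $V^*\otimes S_\mu V^*$, so $\iota$ and $P$ are unique up to scale. The map $T'$ is the Young flattening of the $GL(V)$-invariant tensor in $V^*\otimes S_\mu V^*\otimes S_\nu V$. *)

theory Defs
  imports "HOL-Analysis.Analysis" "HOL-Library.Function_Algebras"
begin

text \<open>V = C^k with basis e_0..e_(k-1).  A tensor of order n over V
  is a coefficient function on index lists of length n with entries < k
  (and 0 elsewhere).  The dual space V* is identified with C^k via the dual basis;
  the GL(V)-action on V* is the standard action twisted by the automorphism
  g -> (g^-1)^T of GL_k, which changes neither invariant subspaces, nor equivariance,
  nor isotypic decompositions.  Hence we work with the standard (polynomial) action,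
  under which S_lambda V* corresponds to the irreducible of highest weight lambda.\<close>

definition fscale :: "complex \<Rightarrow> (nat list \<Rightarrow> complex) \<Rightarrow> (nat list \<Rightarrow> complex)" where
  "fscale c f = (\<lambda>xs. c * f xs)"

global_interpretation fv: vector_space fscale
  by unfold_locales (auto simp: fscale_def algebra_simps fun_eq_iff)

definition idx :: "nat \<Rightarrow> nat \<Rightarrow> nat list set" where
  "idx k n = {xs. length xs = n \<and> set xs \<subseteq> {..<k}}"

definition tens :: "nat \<Rightarrow> nat \<Rightarrow> (nat list \<Rightarrow> complex) set" where
  "tens k n = {t. \<forall>xs. xs \<notin> idx k n \<longrightarrow> t xs = 0}"

definition outer :: "nat \<Rightarrow> (nat list \<Rightarrow> complex) \<Rightarrow> (nat list \<Rightarrow> complex) \<Rightarrow> (nat list \<Rightarrow> complex)" where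
  "outer a f g = (\<lambda>xs. f (take a xs) * g (drop a xs))"

definition tprod :: "nat \<Rightarrow> (nat list \<Rightarrow> complex) set \<Rightarrow> (nat list \<Rightarrow> complex) set \<Rightarrow> (nat list \<Rightarrow> complex) set" where
  "tprod a A B = fv.span {outer a f g | f g. f \<in> A \<and> g \<in> B}"

definition GL :: "nat \<Rightarrow> (nat \<Rightarrow> nat \<Rightarrow> complex) set" where
  "GL k = {g. \<exists>h. (\<forall>i<k. \<forall>j<k. (\<Sum>l<k. g i l * h l j) = (if i = j then 1 else 0))
                 \<and> (\<forall>i<k. \<forall>j<k. (\<Sum>l<k. h i l * g l j) = (if i = j then 1 else 0))}"

definition Borel :: "nat \<Rightarrow> (nat \<Rightarrow> nat \<Rightarrow> complex) set" where
  "Borel k = {b \<in> GL k. \<forall>i<k. \<forall>j<k. j < i \<longrightarrow> b i j = 0}"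

definition rho :: "nat \<Rightarrow> nat \<Rightarrow> (nat \<Rightarrow> nat \<Rightarrow> complex) \<Rightarrow> (nat list \<Rightarrow> complex) \<Rightarrow> (nat list \<Rightarrow> complex)" where
  "rho k n g t = (\<lambda>xs. if xs \<in> idx k n
      then (\<Sum>js\<in>idx k n. (\<Prod>m<n. g (xs ! m) (js ! m)) * t js) else 0)"

definition GL_stable :: "nat \<Rightarrow> nat \<Rightarrow> (nat list \<Rightarrow> complex) set \<Rightarrow> bool" where
  "GL_stable k n W \<longleftrightarrow> fv.subspace W \<and> W \<subseteq> tens k n \<and> (\<forall>g\<in>GL k. \<forall>w\<in>W. rho k n g w \<in> W)"

definition irreducible_rep :: "nat \<Rightarrow> nat \<Rightarrow> (nat list \<Rightarrow> complex) set \<Rightarrow> bool" where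
  "irreducible_rep k n W \<longleftrightarrow> GL_stable k n W \<and> W \<noteq> {0} \<and>
     (\<forall>U. U \<subseteq> W \<longrightarrow> GL_stable k n U \<longrightarrow> U = {0} \<or> U = W)"

definition hwv :: "nat \<Rightarrow> nat \<Rightarrow> (nat list \<Rightarrow> complex) set \<Rightarrow> (nat \<Rightarrow> nat) \<Rightarrow> (nat list \<Rightarrow> complex) set" where
  "hwv k n W \<pi> = {w \<in> W. \<forall>b\<in>Borel k. rho k n b w = fscale (\<Prod>i<k. b i i ^ \<pi> i) w}"

text \<open>Multiplicity of the isotypic component of highest weight pi in the
  (completely reducible, polynomial) representation W = dimension of the space of
  highest weight vectors of weight pi.\<close>
definition mult :: "nat \<Rightarrow> nat \<Rightarrow> (nat list \<Rightarrow> complex) set \<Rightarrow> (nat \<Rightarrow> nat) \<Rightarrow> nat" where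
  "mult k n W \<pi> = fv.dim (hwv k n W \<pi>)"

definition partition_k :: "nat \<Rightarrow> (nat \<Rightarrow> nat) \<Rightarrow> bool" where
  "partition_k k lam \<longleftrightarrow> (\<forall>i j. i \<le> j \<longrightarrow> lam j \<le> lam i) \<and> (\<forall>i\<ge>k. lam i = 0)"

definition psize :: "nat \<Rightarrow> (nat \<Rightarrow> nat) \<Rightarrow> nat" where
  "psize k lam = (\<Sum>i<k. lam i)"

definition schur_module :: "nat \<Rightarrow> (nat \<Rightarrow> nat) \<Rightarrow> (nat list \<Rightarrow> complex) set \<Rightarrow> bool" where
  "schur_module k lam S \<longleftrightarrow> irreducible_rep k (psize k lam) S \<and> hwv k (psize k lam) S lam \<noteq> {0}"

definition equivariant_map :: "nat \<Rightarrow> nat \<Rightarrow> nat \<Rightarrow> (nat list \<Rightarrow> complex) set \<Rightarrow> (nat list \<Rightarrow> complex) set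
     \<Rightarrow> ((nat list \<Rightarrow> complex) \<Rightarrow> (nat list \<Rightarrow> complex)) \<Rightarrow> bool" where
  "equivariant_map k m n A B L \<longleftrightarrow>
     (\<forall>x\<in>A. L x \<in> B) \<and>
     (\<forall>x\<in>A. \<forall>y\<in>A. L (x + y) = L x + L y) \<and>
     (\<forall>c. \<forall>x\<in>A. L (fscale c x) = fscale c (L x)) \<and>
     (\<forall>g\<in>GL k. \<forall>x\<in>A. L (rho k m g x) = rho k n g (L x))"

text \<open>id_a \<otimes> L, where L maps order-m to order-n tensors: result has order a + n.\<close>
definition id_tensor :: "nat \<Rightarrow> nat \<Rightarrow> nat \<Rightarrow> nat \<Rightarrow> ((nat list \<Rightarrow> complex) \<Rightarrow> (nat list \<Rightarrow> complex))
     \<Rightarrow> (nat list \<Rightarrow> complex) \<Rightarrow> (nat list \<Rightarrow> complex)" where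
  "id_tensor k a m n L t = (\<lambda>xs. if xs \<in> idx k (a + n)
      then L (\<lambda>ys. if ys \<in> idx k m then t (take a xs @ ys) else 0) (drop a xs) else 0)"

text \<open>L \<otimes> id_b, where L maps order-m to order-n tensors: result has order n + b.\<close>
definition tensor_id :: "nat \<Rightarrow> nat \<Rightarrow> nat \<Rightarrow> nat \<Rightarrow> ((nat list \<Rightarrow> complex) \<Rightarrow> (nat list \<Rightarrow> complex))
     \<Rightarrow> (nat list \<Rightarrow> complex) \<Rightarrow> (nat list \<Rightarrow> complex)" where
  "tensor_id k m n b L t = (\<lambda>xs. if xs \<in> idx k (n + b)
      then L (\<lambda>ys. if ys \<in> idx k m then t (ys @ drop n xs) else 0) (take n xs) else 0)"

end

theory Submission
  imports Defs
begin


lemma fscale_apply[simp]: "fscale c f xs = c * f xs" by (simp add: fscale_def)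

lemma sum_fun_apply: "(sum f A) x = (\<Sum>a\<in>A. f a x)"
  by (induction A rule: infinite_finite_induct) auto

lemma fv_subspace_iff: "fv.subspace S \<longleftrightarrow> 0 \<in> S \<and> (\<forall>x\<in>S. \<forall>y\<in>S. x+y \<in> S) \<and> (\<forall>c. \<forall>x\<in>S. fscale c x \<in> S)"
  by (simp add: fv.subspace_def)

lemma mem_idx[simp]: "xs \<in> idx k n \<longleftrightarrow> length xs = n \<and> set xs \<subseteq> {..<k}"
  by (simp add: idx_def)

lemma finite_idx[simp]: "finite (idx k n)"
  unfolding idx_def using finite_lists_length_eq[of "{..<k}" n] by (simp add: conj_commute)

lemma take_idx: "xs \<in> idx k (a+b) \<Longrightarrow> take a xs \<in> idx k a"
  using set_take_subset[of a xs] by auto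
lemma drop_idx: "xs \<in> idx k (a+b) \<Longrightarrow> drop a xs \<in> idx k b"
  using set_drop_subset[of a xs] by auto
lemma app_idx: "p \<in> idx k a \<Longrightarrow> q \<in> idx k b \<Longrightarrow> p @ q \<in> idx k (a+b)"
  by auto
lemma notidx_split: assumes "xs \<notin> idx k (a+b)" shows "take a xs \<notin> idx k a \<or> drop a xs \<notin> idx k b"
proof (rule ccontr)
  assume "\<not> (take a xs \<notin> idx k a \<or> drop a xs \<notin> idx k b)"
  then have "take a xs \<in> idx k a" "drop a xs \<in> idx k b" by blast+
  then have "take a xs @ drop a xs \<in> idx k (a+b)" by (rule app_idx)
  then show False using assms by (simp del: mem_idx)
qed

lemma tens_subspace: "fv.subspace (tens k n)"
  unfolding fv_subspace_iff tens_def by auto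
lemma tensD: "t \<in> tens k n \<Longrightarrow> xs \<notin> idx k n \<Longrightarrow> t xs = 0"
  unfolding tens_def by auto
lemma tens_eqI: assumes s: "s \<in> tens k n" and t: "t \<in> tens k n" and e: "\<And>xs. xs \<in> idx k n \<Longrightarrow> s xs = t xs"
  shows "s = t"
proof
  fix xs show "s xs = t xs"
  proof (cases "xs \<in> idx k n")
    case True then show ?thesis by (rule e)
  next
    case False then show ?thesis using tensD[OF s False] tensD[OF t False] by simp
  qed
qed

definition delta :: "nat list \<Rightarrow> nat list \<Rightarrow> complex" where
  "delta ys = (\<lambda>xs. if ys = xs then 1 else 0)"

lemma tens_span: "tens k n \<subseteq> fv.span (delta ` idx k n)"
proof
  fix t assume t: "t \<in> tens k n"
  have "t = (\<Sum>ys\<in>idx k n. fscale (t ys) (delta ys))"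
  proof
    fix xs
    show "t xs = (\<Sum>ys\<in>idx k n. fscale (t ys) (delta ys)) xs"
    proof -
      have "(\<Sum>ys\<in>idx k n. fscale (t ys) (delta ys)) xs = (\<Sum>ys\<in>idx k n. if ys = xs then t ys else 0)"
        unfolding sum_fun_apply by (rule sum.cong) (auto simp: delta_def)
      also have "\<dots> = t xs" using t by (simp add: sum.delta tensD)
      finally show ?thesis by simp
    qed
  qed
  also have "\<dots> \<in> fv.span (delta ` idx k n)"
    by (intro fv.span_sum fv.span_scale fv.span_base) auto
  finally show "t \<in> fv.span (delta ` idx k n)" .
qed

lemma outer_apply: "outer a f g xs = f (take a xs) * g (drop a xs)"
  by (simp add: outer_def)

lemma outer_tens: assumes f: "f \<in> tens k a" and g: "g \<in> tens k b" shows "outer a f g \<in> tens k (a+b)"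
  unfolding tens_def mem_Collect_eq
proof (intro allI impI)
  fix xs assume "xs \<notin> idx k (a+b)"
  then have "take a xs \<notin> idx k a \<or> drop a xs \<notin> idx k b" by (rule notidx_split)
  then show "outer a f g xs = 0"
  proof
    assume "take a xs \<notin> idx k a" then have "f (take a xs) = 0" by (rule tensD[OF f])
    then show ?thesis by (simp add: outer_apply)
  next
    assume "drop a xs \<notin> idx k b" then have "g (drop a xs) = 0" by (rule tensD[OF g])
    then show ?thesis by (simp add: outer_apply)
  qed
qed

lemma outer_add1: "outer a (f + f') g = outer a f g + outer a f' g"
  by (auto simp: outer_def algebra_simps)
lemma outer_add2: "outer a f (g + g') = outer a f g + outer a f g'"
  by (auto simp: outer_def algebra_simps)
lemma outer_scale1: "outer a (fscale c f) g = fscale c (outer a f g)"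
  by (auto simp: outer_def fun_eq_iff)
lemma outer_scale2: "outer a f (fscale c g) = fscale c (outer a f g)"
  by (auto simp: outer_def fun_eq_iff)
lemma outer_zero1: "outer a 0 g = 0" by (auto simp: outer_def fun_eq_iff)
lemma outer_zero2: "outer a f 0 = 0" by (auto simp: outer_def fun_eq_iff)

lemma outer_assoc: "outer a f (outer 1 v s) = outer (a+1) (outer a f v) s"
  by (simp add: outer_def take_take drop_take drop_drop mult.assoc fun_eq_iff add.commute)

lemma tprod_subspace: "fv.subspace (tprod a A B)"
  unfolding tprod_def by (rule fv.subspace_span)
lemma outer_in_tprod: "f \<in> A \<Longrightarrow> g \<in> B \<Longrightarrow> outer a f g \<in> tprod a A B"
  unfolding tprod_def by (rule fv.span_base) blast
lemma tprod_tens: "A \<subseteq> tens k a \<Longrightarrow> B \<subseteq> tens k b \<Longrightarrow> tprod a A B \<subseteq> tens k (a+b)"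
  unfolding tprod_def by (rule fv.span_minimal[OF _ tens_subspace]) (auto intro!: outer_tens)

lemma rho_tens: "rho k n g t \<in> tens k n"
  unfolding tens_def rho_def by (auto simp del: mem_idx)
lemma rho_add: "rho k n g (x+y) = rho k n g x + rho k n g y"
  unfolding rho_def by (auto simp: fun_eq_iff distrib_left sum.distrib)
lemma rho_scale: "rho k n g (fscale c x) = fscale c (rho k n g x)"
  unfolding rho_def by (auto simp: fun_eq_iff sum_distrib_left mult_ac)
lemma rho_zero: "rho k n g 0 = 0"
  unfolding rho_def by (auto simp: fun_eq_iff)
lemma rho_out: "xs \<notin> idx k n \<Longrightarrow> rho k n g t xs = 0"
  unfolding rho_def by (simp del: mem_idx)

lemma prod_split_nat: "(\<Prod>m<(a::nat)+b. F m) = (\<Prod>m<a. F m) * (\<Prod>m<b. F (a+m))"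
  by (induction b) (auto simp: mult_ac)

lemma idx_add_image: "idx k (a+b) = (\<lambda>(p,q). p @ q) ` (idx k a \<times> idx k b)"
proof (rule set_eqI, rule iffI)
  fix xs assume "xs \<in> idx k (a+b)"
  then show "xs \<in> (\<lambda>(p,q). p @ q) ` (idx k a \<times> idx k b)"
    using take_idx[of xs k a b] drop_idx[of xs k a b]
    by (intro image_eqI[where x="(take a xs, drop a xs)"]) auto
qed auto

lemma inj_append_idx: "inj_on (\<lambda>(p,q). p @ q) (idx k a \<times> idx k b)"
  by (auto simp: inj_on_def)

lemma rho_outer: "rho k (a+b) g (outer a f h) = outer a (rho k a g f) (rho k b g h)"
proof
  fix xs
  show "rho k (a+b) g (outer a f h) xs = outer a (rho k a g f) (rho k b g h) xs"
  proof (cases "xs \<in> idx k (a+b)")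
    case False
    then show ?thesis using notidx_split[OF False] by (auto simp: outer_apply rho_out simp del: mem_idx)
  next
    case True
    have lx: "length xs = a + b" using True by simp
    let ?F = "\<lambda>js. (\<Prod>m<a+b. g (xs ! m) (js ! m)) * outer a f h js"
    have "rho k (a+b) g (outer a f h) xs = (\<Sum>js\<in>idx k (a+b). ?F js)"
      using True by (simp add: rho_def del: mem_idx)
    also have "\<dots> = (\<Sum>pq\<in>idx k a \<times> idx k b. ?F (fst pq @ snd pq))"
      unfolding idx_add_image[of k a b] sum.reindex[OF inj_append_idx] by (simp add: case_prod_beta comp_def)
    also have "\<dots> = (\<Sum>pq\<in>idx k a \<times> idx k b.
        ((\<Prod>m<a. g (take a xs ! m) (fst pq ! m)) * f (fst pq)) *
        ((\<Prod>m<b. g (drop a xs ! m) (snd pq ! m)) * h (snd pq)))"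
    proof (rule sum.cong[OF refl])
      fix pq assume pq: "pq \<in> idx k a \<times> idx k b"
      obtain p q where pqd: "pq = (p,q)" by (cases pq)
      have lp: "length p = a" and lq: "length q = b" using pq pqd by auto
      have e1: "(\<Prod>m<a. g (xs ! m) ((p@q) ! m)) = (\<Prod>m<a. g (take a xs ! m) (p ! m))"
        by (rule prod.cong) (simp_all add: nth_append lp lx)
      have e2: "(\<Prod>m<b. g (xs ! (a+m)) ((p@q) ! (a+m))) = (\<Prod>m<b. g (drop a xs ! m) (q ! m))"
        by (rule prod.cong) (simp_all add: nth_append lp lx)
      have "(\<Prod>m<a+b. g (xs ! m) ((p@q) ! m)) = (\<Prod>m<a. g (xs ! m) ((p@q) ! m)) * (\<Prod>m<b. g (xs ! (a+m)) ((p@q) ! (a+m)))"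
        by (rule prod_split_nat)
      also have "\<dots> = (\<Prod>m<a. g (take a xs ! m) (p ! m)) * (\<Prod>m<b. g (drop a xs ! m) (q ! m))"
        by (simp only: e1 e2)
      finally have "(\<Prod>m<a+b. g (xs ! m) ((p@q) ! m)) = (\<Prod>m<a. g (take a xs ! m) (p ! m)) * (\<Prod>m<b. g (drop a xs ! m) (q ! m))" .
      moreover have "outer a f h (p @ q) = f p * h q" using lp by (simp add: outer_apply)
      ultimately show "?F (fst pq @ snd pq) = ((\<Prod>m<a. g (take a xs ! m) (fst pq ! m)) * f (fst pq)) *
        ((\<Prod>m<b. g (drop a xs ! m) (snd pq ! m)) * h (snd pq))"
        by (simp add: pqd mult_ac)
    qed
    also have "\<dots> = (\<Sum>p\<in>idx k a. (\<Prod>m<a. g (take a xs ! m) (p ! m)) * f p) *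
        (\<Sum>q\<in>idx k b. (\<Prod>m<b. g (drop a xs ! m) (q ! m)) * h q)"
      unfolding sum_product sum.cartesian_product by (simp add: case_prod_beta)
    also have "\<dots> = outer a (rho k a g f) (rho k b g h) xs"
      using take_idx[OF True] drop_idx[OF True] by (simp add: outer_apply rho_def del: mem_idx)
    finally show ?thesis .
  qed
qed



definition lin_on :: "(nat list \<Rightarrow> complex) set \<Rightarrow> ((nat list \<Rightarrow> complex) \<Rightarrow> (nat list \<Rightarrow> complex)) \<Rightarrow> bool" where
  "lin_on D L \<longleftrightarrow> (\<forall>x\<in>D. \<forall>y\<in>D. L (x+y) = L x + L y) \<and> (\<forall>c. \<forall>x\<in>D. L (fscale c x) = fscale c (L x))"

lemma lin_onD1: "lin_on D L \<Longrightarrow> x \<in> D \<Longrightarrow> y \<in> D \<Longrightarrow> L (x+y) = L x + L y"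
  by (simp add: lin_on_def)
lemma lin_onD2: "lin_on D L \<Longrightarrow> x \<in> D \<Longrightarrow> L (fscale c x) = fscale c (L x)"
  by (simp add: lin_on_def)
lemma lin_on_subset: assumes "lin_on D L" "D' \<subseteq> D" shows "lin_on D' L"
  using assms unfolding lin_on_def by (meson subsetD)
lemma lin_on_zero: assumes L: "lin_on D L" and D: "fv.subspace D" shows "L 0 = 0"
proof -
  have "L (0 + 0) = L 0 + L 0" by (rule lin_onD1[OF L fv.subspace_0[OF D] fv.subspace_0[OF D]])
  then have "L 0 + 0 = L 0 + L 0" by (simp only: add_0_left add_0_right)
  then show ?thesis by (metis add_left_cancel)
qed

lemma lin_on_sum: assumes L: "lin_on D L" and D: "fv.subspace D" and F: "finite F" and v: "\<forall>i\<in>F. v i \<in> D"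
  shows "L (\<Sum>i\<in>F. v i) = (\<Sum>i\<in>F. L (v i))"
  using F v
proof (induction F rule: finite_induct)
  case empty show ?case unfolding sum.empty by (rule lin_on_zero[OF L D])
next
  case (insert a F)
  have sF: "(\<Sum>i\<in>F. v i) \<in> D" using insert D by (intro fv.subspace_sum) auto
  have va: "v a \<in> D" using insert by simp
  have IH: "L (\<Sum>i\<in>F. v i) = (\<Sum>i\<in>F. L (v i))" using insert by simp
  have e1: "(\<Sum>i\<in>insert a F. v i) = v a + (\<Sum>i\<in>F. v i)" by (rule sum.insert[OF insert.hyps])
  have e2: "(\<Sum>i\<in>insert a F. L (v i)) = L (v a) + (\<Sum>i\<in>F. L (v i))" by (rule sum.insert[OF insert.hyps])
  show ?case unfolding e1 e2 lin_onD1[OF L va sF] IH ..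
qed

lemma lin_on_UNIV_rho: "lin_on UNIV (rho k n g)"
  by (simp add: lin_on_def rho_add rho_scale)

lemma span_image_sub:
  assumes D: "fv.subspace D" and L: "lin_on D L" and G: "G \<subseteq> D" and LG: "L ` G \<subseteq> E" and E: "fv.subspace E"
  shows "L ` fv.span G \<subseteq> E"
proof
  fix y assume "y \<in> L ` fv.span G"
  then obtain x where x: "x \<in> fv.span G" "y = L x" by blast
  have "x \<in> D \<and> L x \<in> E"
  proof (rule fv.span_induct[OF x(1), where P="\<lambda>x. x \<in> D \<and> L x \<in> E"])
    show "fv.subspace {x. x \<in> D \<and> L x \<in> E}"
      using D E lin_on_zero[OF L D] lin_onD1[OF L] lin_onD2[OF L]
      unfolding fv_subspace_iff by auto
  next
    fix x assume "x \<in> G" then show "x \<in> D \<and> L x \<in> E" using G LG by auto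
  qed
  then show "y \<in> E" using x by simp
qed

lemma image_subspace: "fv.subspace D \<Longrightarrow> lin_on D L \<Longrightarrow> fv.subspace (L ` D)"
  unfolding fv_subspace_iff
proof (intro conjI ballI allI)
  assume D: "0 \<in> D \<and> (\<forall>x\<in>D. \<forall>y\<in>D. x + y \<in> D) \<and> (\<forall>c. \<forall>x\<in>D. fscale c x \<in> D)" and L: "lin_on D L"
  have "L 0 = 0" using lin_on_zero[OF L] D unfolding fv_subspace_iff by blast
  then show "0 \<in> L ` D" using D by (metis image_eqI)
  fix x y assume "x \<in> L ` D" "y \<in> L ` D"
  then obtain x' y' where xy: "x' \<in> D" "y' \<in> D" "x = L x'" "y = L y'" by blast
  then have "x + y = L (x' + y')" using lin_onD1[OF L] by simp
  moreover have "x' + y' \<in> D" using D xy by blast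
  ultimately show "x + y \<in> L ` D" by blast
next
  fix c x
  assume D: "0 \<in> D \<and> (\<forall>x\<in>D. \<forall>y\<in>D. x + y \<in> D) \<and> (\<forall>c. \<forall>x\<in>D. fscale c x \<in> D)" and L: "lin_on D L"
    and "x \<in> L ` D"
  then obtain x' where xy: "x' \<in> D" "x = L x'" by blast
  then have "fscale c x = L (fscale c x')" using lin_onD2[OF L] by simp
  moreover have "fscale c x' \<in> D" using D xy by blast
  ultimately show "fscale c x \<in> L ` D" by blast
qed

lemma fd_basis:
  assumes "X \<subseteq> tens k n"
  obtains B where "B \<subseteq> X" "fv.independent B" "X \<subseteq> fv.span B" "card B = fv.dim X" "finite B"
proof -
  obtain B where B: "B \<subseteq> X" "fv.independent B" "X \<subseteq> fv.span B" "card B = fv.dim X"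
    using fv.basis_exists by blast
  have "B \<subseteq> fv.span (delta ` idx k n)" using B(1) assms tens_span by blast
  then have "finite B"
    using fv.independent_span_bound[OF finite_imageI[OF finite_idx] B(2)] by simp
  then show ?thesis using B that by blast
qed

lemma indep_card_le:
  assumes "fv.independent B" "B \<subseteq> X" "X \<subseteq> tens k n"
  shows "finite B \<and> card B \<le> fv.dim X"
proof -
  obtain C where C: "C \<subseteq> X" "fv.independent C" "X \<subseteq> fv.span C" "card C = fv.dim X" "finite C"
    using fd_basis[OF assms(3)] by blast
  show ?thesis using fv.independent_span_bound[of C B] C assms by auto
qed

lemma dim_mono_t: "X \<subseteq> Y \<Longrightarrow> Y \<subseteq> tens k n \<Longrightarrow> fv.dim X \<le> fv.dim Y"
proof -
  assume XY: "X \<subseteq> Y" and Y: "Y \<subseteq> tens k n"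
  obtain B where B: "B \<subseteq> X" "fv.independent B" "X \<subseteq> fv.span B" "card B = fv.dim X" "finite B"
    using fd_basis[of X k n] XY Y by blast
  then show ?thesis using indep_card_le[of B Y k n] XY Y by auto
qed

lemma dim_eq_sub:
  assumes X: "fv.subspace X" and XY: "X \<subseteq> Y" and Y: "Y \<subseteq> tens k n" and d: "fv.dim Y \<le> fv.dim X"
  shows "X = Y"
proof -
  obtain B where B: "B \<subseteq> X" "fv.independent B" "X \<subseteq> fv.span B" "card B = fv.dim X" "finite B"
    using fd_basis[of X k n] XY Y by blast
  have sB: "fv.span B = X" using B X fv.span_minimal by blast
  show ?thesis
  proof (rule ccontr)
    assume "X \<noteq> Y"
    then obtain y where y: "y \<in> Y" "y \<notin> X" using XY by blast
    have "fv.independent (insert y B)" using y sB B by (intro fv.independent_insertI) auto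
    then have "card (insert y B) \<le> fv.dim Y" using indep_card_le[of "insert y B" Y k n] y B XY Y by auto
    moreover have "y \<notin> B" using y B by blast
    then have "card (insert y B) = card B + 1" using card_insert_disjoint[OF B(5)] by simp
    ultimately show False using d B by simp
  qed
qed

lemma dim_inj_image:
  assumes X: "fv.subspace X" "X \<subseteq> tens k n" and L: "lin_on X L" and inj: "inj_on L X"
  shows "fv.dim (L ` X) = fv.dim X"
proof -
  obtain B where B: "B \<subseteq> X" "fv.independent B" "X \<subseteq> fv.span B" "card B = fv.dim X" "finite B"
    using fd_basis[OF X(2)] by blast
  have sB: "fv.span B = X" using B X fv.span_minimal by blast
  have injB: "inj_on L B" using inj B by (meson inj_on_subset)
  have L0: "L 0 = 0" using lin_on_zero[OF L X(1)] .
  show ?thesis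
  proof (rule fv.dim_unique[of "L ` B"])
    show "L ` B \<subseteq> L ` X" using B by auto
    have "L ` fv.span B \<subseteq> fv.span (L ` B)"
      by (rule span_image_sub[OF X(1) L B(1) fv.span_superset fv.subspace_span])
    then show "L ` X \<subseteq> fv.span (L ` B)" using sB by simp
    show "card (L ` B) = fv.dim X" using card_image[OF injB] B by simp
    show "fv.independent (L ` B)"
    proof (rule fv.independent_if_scalars_zero)
      show "finite (L ` B)" using B by simp
      fix f x assume s: "(\<Sum>x\<in>L ` B. fscale (f x) x) = 0" and x: "x \<in> L ` B"
      have "(\<Sum>x\<in>L ` B. fscale (f x) x) = (\<Sum>b\<in>B. fscale (f (L b)) (L b))"
        by (simp add: sum.reindex[OF injB])
      also have "\<dots> = (\<Sum>b\<in>B. L (fscale (f (L b)) b))"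
        using B by (intro sum.cong) (auto simp: lin_onD2[OF L])
      also have "\<dots> = L (\<Sum>b\<in>B. fscale (f (L b)) b)"
        using B X by (intro lin_on_sum[OF L, symmetric]) (auto simp: fv.subspace_scale)
      finally have eqL: "L (\<Sum>b\<in>B. fscale (f (L b)) b) = L 0" using s L0 by simp
      have sX: "(\<Sum>b\<in>B. fscale (f (L b)) b) \<in> X"
        using B X by (intro fv.subspace_sum) (auto simp: fv.subspace_scale)
      have z: "(\<Sum>b\<in>B. fscale (f (L b)) b) = 0"
        by (rule inj_onD[OF inj eqL sX fv.subspace_0[OF X(1)]])
      obtain b where b: "b \<in> B" "x = L b" using x by blast
      have ind: "\<forall>S\<subseteq>B. finite S \<longrightarrow> (\<forall>u. (\<Sum>v\<in>S. fscale (u v) v) = 0 \<longrightarrow> (\<forall>v\<in>S. u v = 0))"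
        using B(2) unfolding fv.independent_explicit_finite_subsets .
      have u0: "u v = 0" if "(\<Sum>v\<in>B. fscale (u v) v) = 0" "v \<in> B" for u v
        using ind B(5) that by blast
      have "f (L b) = 0" using u0[of "\<lambda>b. f (L b)", OF z b(1)] by simp
      then show "f x = 0" using b by simp
    qed
  qed
qed

lemma hwv_sub: "hwv k n X \<pi> \<subseteq> X" by (auto simp: hwv_def)
lemma hwv_mono: "X \<subseteq> Y \<Longrightarrow> hwv k n X \<pi> \<subseteq> hwv k n Y \<pi>" by (auto simp: hwv_def)

lemma fscale_comm: "fscale c (fscale d x) = fscale d (fscale c x)"
  by (auto simp: fun_eq_iff)

lemma hwv_subspace: "fv.subspace X \<Longrightarrow> fv.subspace (hwv k n X \<pi>)"
  unfolding fv_subspace_iff hwv_def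
  by (auto simp: rho_add rho_zero rho_scale fscale_comm fv.scale_right_distrib)

definition equiv_on :: "nat \<Rightarrow> nat \<Rightarrow> nat \<Rightarrow> (nat list \<Rightarrow> complex) set \<Rightarrow> ((nat list \<Rightarrow> complex) \<Rightarrow> (nat list \<Rightarrow> complex)) \<Rightarrow> bool" where
  "equiv_on k n1 n2 D L \<longleftrightarrow> (\<forall>g\<in>GL k. \<forall>x\<in>D. L (rho k n1 g x) = rho k n2 g (L x))"

lemma Borel_GL: "Borel k \<subseteq> GL k" by (auto simp: Borel_def)

lemma hwv_image:
  assumes L: "lin_on X L" and e: "equiv_on k n1 n2 X L"
  shows "L ` hwv k n1 X \<pi> \<subseteq> hwv k n2 (L ` X) \<pi>"
proof
  fix y assume "y \<in> L ` hwv k n1 X \<pi>"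
  then obtain x where x: "x \<in> hwv k n1 X \<pi>" "y = L x" by blast
  have xX: "x \<in> X" using x hwv_sub by blast
  { fix b assume b: "b \<in> Borel k"
    have bG: "b \<in> GL k" using Borel_GL b by blast
    have "L (rho k n1 b x) = rho k n2 b (L x)" using e bG xX unfolding equiv_on_def by blast
    then have "rho k n2 b y = L (rho k n1 b x)" using x by simp
    also have "\<dots> = L (fscale (\<Prod>i<k. b i i ^ \<pi> i) x)" using x b by (simp add: hwv_def)
    also have "\<dots> = fscale (\<Prod>i<k. b i i ^ \<pi> i) y" using lin_onD2[OF L xX] x by simp
    finally have "rho k n2 b y = fscale (\<Prod>i<k. b i i ^ \<pi> i) y" . }
  then show "y \<in> hwv k n2 (L ` X) \<pi>" using xX x by (auto simp: hwv_def)
qed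

lemma hwv_image_inj:
  assumes X: "GL_stable k n1 X" and L: "lin_on X L" and e: "equiv_on k n1 n2 X L" and inj: "inj_on L X"
  shows "hwv k n2 (L ` X) \<pi> = L ` hwv k n1 X \<pi>"
proof
  show "L ` hwv k n1 X \<pi> \<subseteq> hwv k n2 (L ` X) \<pi>" by (rule hwv_image[OF L e])
  show "hwv k n2 (L ` X) \<pi> \<subseteq> L ` hwv k n1 X \<pi>"
  proof
    fix y assume y: "y \<in> hwv k n2 (L ` X) \<pi>"
    then obtain x where x: "x \<in> X" "y = L x" by (auto simp: hwv_def)
    have sX: "fv.subspace X" using X by (simp add: GL_stable_def)
    { fix b assume b: "b \<in> Borel k"
      have bG: "b \<in> GL k" using Borel_GL b by blast
      have bX: "rho k n1 b x \<in> X" using X bG x unfolding GL_stable_def by blast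
      have "L (rho k n1 b x) = rho k n2 b (L x)" using e bG x unfolding equiv_on_def by blast
      then have "L (rho k n1 b x) = rho k n2 b y" using x by simp
      also have "\<dots> = fscale (\<Prod>i<k. b i i ^ \<pi> i) y" using y b by (simp add: hwv_def)
      also have "\<dots> = L (fscale (\<Prod>i<k. b i i ^ \<pi> i) x)" using lin_onD2[OF L x(1)] x by simp
      finally have "rho k n1 b x = fscale (\<Prod>i<k. b i i ^ \<pi> i) x"
        using inj bX x sX by (meson fv.subspace_scale inj_onD) }
    then have "x \<in> hwv k n1 X \<pi>" using x by (auto simp: hwv_def)
    then show "y \<in> L ` hwv k n1 X \<pi>" using x by blast
  qed
qed

lemma dim_hwv_inj:
  assumes X: "GL_stable k n1 X" and L: "lin_on X L" and e: "equiv_on k n1 n2 X L" and inj: "inj_on L X"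
  shows "fv.dim (hwv k n2 (L ` X) \<pi>) = fv.dim (hwv k n1 X \<pi>)"
proof -
  have sX: "fv.subspace X" "X \<subseteq> tens k n1" using X by (auto simp: GL_stable_def)
  have hs: "hwv k n1 X \<pi> \<subseteq> X" by (rule hwv_sub)
  show ?thesis unfolding hwv_image_inj[OF X L e inj]
    by (rule dim_inj_image[OF hwv_subspace[OF sX(1)] _ lin_on_subset[OF L hs] inj_on_subset[OF inj hs]])
       (use hs sX(2) in blast)
qed

lemma GL_stable_tens: "GL_stable k n (tens k n)"
  by (auto simp: GL_stable_def tens_subspace rho_tens)

lemma tprod_stable:
  assumes A: "GL_stable k a A" and B: "GL_stable k b B"
  shows "GL_stable k (a+b) (tprod a A B)"
proof -
  have "tprod a A B \<subseteq> tens k (a+b)" using A B by (intro tprod_tens) (auto simp: GL_stable_def)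
  moreover
  { fix g assume g: "g \<in> GL k"
    have "rho k (a+b) g ` tprod a A B \<subseteq> tprod a A B"
      unfolding tprod_def
    proof (rule span_image_sub[OF fv.subspace_UNIV lin_on_UNIV_rho])
      show "rho k (a + b) g ` {outer a f h |f h. f \<in> A \<and> h \<in> B} \<subseteq> fv.span {outer a f h |f h. f \<in> A \<and> h \<in> B}"
      proof
        fix t assume "t \<in> rho k (a + b) g ` {outer a f h |f h. f \<in> A \<and> h \<in> B}"
        then obtain f h where t: "t = rho k (a+b) g (outer a f h)" "f \<in> A" "h \<in> B" by blast
        have rf: "rho k a g f \<in> A" using A g t(2) unfolding GL_stable_def by blast
        have rh: "rho k b g h \<in> B" using B g t(3) unfolding GL_stable_def by blast
        have "t \<in> {outer a f h |f h. f \<in> A \<and> h \<in> B}" using t(1) rf rh rho_outer by blast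
        then show "t \<in> fv.span {outer a f h |f h. f \<in> A \<and> h \<in> B}" by (rule fv.span_base)
      qed
    qed (auto simp: fv.subspace_span) }
  ultimately show ?thesis by (auto simp: GL_stable_def tprod_subspace)
qed



lemma inj_from_kernel:
  assumes D: "fv.subspace D" and L: "lin_on D L" and k: "\<forall>t\<in>D. L t = 0 \<longrightarrow> t = 0"
  shows "inj_on L D"
proof (rule inj_onI)
  fix x y assume x: "x \<in> D" and y: "y \<in> D" and e: "L x = L y"
  have my: "fscale (-1) y \<in> D" by (rule fv.subspace_scale[OF D y])
  have s: "x + fscale (-1) y \<in> D" by (rule fv.subspace_add[OF D x my])
  have "L (x + fscale (-1) y) = L x + fscale (-1) (L y)" by (simp only: lin_onD1[OF L x my] lin_onD2[OF L y])
  also have "\<dots> = 0" using e by (auto simp: fun_eq_iff)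
  finally have z: "x + fscale (-1) y = 0" using k s by blast
  show "x = y"
  proof
    fix xs
    have "(x + fscale (-1) y) xs = 0" using z by simp
    then show "x xs = y xs" by (simp add: algebra_simps)
  qed
qed

definition pslice :: "nat \<Rightarrow> nat \<Rightarrow> nat list \<Rightarrow> (nat list \<Rightarrow> complex) \<Rightarrow> (nat list \<Rightarrow> complex)" where
  "pslice k m p t = (\<lambda>ys. if ys \<in> idx k m then t (p @ ys) else 0)"
definition sslice :: "nat \<Rightarrow> nat \<Rightarrow> nat list \<Rightarrow> (nat list \<Rightarrow> complex) \<Rightarrow> (nat list \<Rightarrow> complex)" where
  "sslice k m q t = (\<lambda>ys. if ys \<in> idx k m then t (ys @ q) else 0)"

lemma lin_pslice: "lin_on UNIV (pslice k m p)"
  by (auto simp: lin_on_def pslice_def fun_eq_iff)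
lemma lin_sslice: "lin_on UNIV (sslice k m q)"
  by (auto simp: lin_on_def sslice_def fun_eq_iff)

lemma pslice_outer: "length p = a \<Longrightarrow> h \<in> tens k m \<Longrightarrow> pslice k m p (outer a f h) = fscale (f p) h"
  by (auto simp: pslice_def outer_apply fun_eq_iff tensD simp del: mem_idx)
lemma sslice_outer: assumes x: "x \<in> tens k m" shows "sslice k m q (outer m x s) = fscale (s q) x"
proof
  fix ys show "sslice k m q (outer m x s) ys = fscale (s q) x ys"
  proof (cases "ys \<in> idx k m")
    case True then have "length ys = m" by simp
    then show ?thesis using True by (simp add: sslice_def outer_apply mult.commute del: mem_idx)
  next
    case False then show ?thesis using tensD[OF x False] by (simp add: sslice_def del: mem_idx)
  qed
qed

lemma pslice_tprod:
  assumes Z: "fv.subspace Z" "Z \<subseteq> tens k m" and t: "t \<in> tprod a Y Z" and p: "length p = a"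
  shows "pslice k m p t \<in> Z"
proof -
  have "pslice k m p ` tprod a Y Z \<subseteq> Z"
    unfolding tprod_def
    by (rule span_image_sub[OF fv.subspace_UNIV lin_pslice]) (use Z p in \<open>auto simp: pslice_outer fv.subspace_scale\<close>)
  then show ?thesis using t by blast
qed

lemma sslice_tprod:
  assumes Y: "fv.subspace Y" "Y \<subseteq> tens k m" and t: "t \<in> tprod m Y S"
  shows "sslice k m q t \<in> Y"
proof -
  have "sslice k m q ` tprod m Y S \<subseteq> Y"
    unfolding tprod_def
    by (rule span_image_sub[OF fv.subspace_UNIV lin_sslice]) (use Y in \<open>auto simp: sslice_outer fv.subspace_scale\<close>)
  then show ?thesis using t by blast
qed

lemma id_tensor_alt: "id_tensor k a m n L t = (\<lambda>xs. if xs \<in> idx k (a+n) then L (pslice k m (take a xs) t) (drop a xs) else 0)"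
  unfolding id_tensor_def pslice_def by (rule refl)
lemma tensor_id_alt: "tensor_id k m n b L t = (\<lambda>xs. if xs \<in> idx k (n+b) then L (sslice k m (drop n xs) t) (take n xs) else 0)"
  unfolding tensor_id_def sslice_def by (rule refl)

locale jmap =
  fixes k a m n :: nat and L :: "(nat list \<Rightarrow> complex) \<Rightarrow> (nat list \<Rightarrow> complex)" and Z Z' :: "(nat list \<Rightarrow> complex) set"
  assumes Zs: "fv.subspace Z" and Zt: "Z \<subseteq> tens k m" and L: "lin_on Z L" and LZ: "L ` Z \<subseteq> Z'"
    and Z's: "fv.subspace Z'" and Z't: "Z' \<subseteq> tens k n"
begin

abbreviation "J \<equiv> id_tensor k a m n L"

lemma J_outer: "f \<in> tens k a \<Longrightarrow> h \<in> Z \<Longrightarrow> J (outer a f h) = outer a f (L h)"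
proof
  fix xs assume f: "f \<in> tens k a" and h: "h \<in> Z"
  have Lh: "L h \<in> tens k n" using LZ Z't h by blast
  show "J (outer a f h) xs = outer a f (L h) xs"
  proof (cases "xs \<in> idx k (a+n)")
    case True
    have "length (take a xs) = a" using True by simp
    then show ?thesis using True h Zt lin_onD2[OF L h]
      by (auto simp: id_tensor_alt pslice_outer outer_apply simp del: mem_idx)
  next
    case False
    then show ?thesis using outer_tens[OF f Lh] tensD by (auto simp: id_tensor_alt simp del: mem_idx)
  qed
qed

lemma J_lin: "lin_on (tprod a Y Z) J"
  unfolding lin_on_def
proof (intro conjI ballI allI)
  fix x y assume x: "x \<in> tprod a Y Z" and y: "y \<in> tprod a Y Z"
  show "J (x + y) = J x + J y"
  proof
    fix xs
    show "J (x + y) xs = (J x + J y) xs"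
    proof (cases "xs \<in> idx k (a+n)")
      case True
      then have l: "length (take a xs) = a" by simp
      have "pslice k m (take a xs) (x+y) = pslice k m (take a xs) x + pslice k m (take a xs) y"
        using lin_onD1[OF lin_pslice] by simp
      then show ?thesis using True lin_onD1[OF L] pslice_tprod[OF Zs Zt x l] pslice_tprod[OF Zs Zt y l]
        by (simp add: id_tensor_alt del: mem_idx)
    qed (simp add: id_tensor_alt del: mem_idx)
  qed
next
  fix c x assume x: "x \<in> tprod a Y Z"
  show "J (fscale c x) = fscale c (J x)"
  proof
    fix xs
    show "J (fscale c x) xs = fscale c (J x) xs"
    proof (cases "xs \<in> idx k (a+n)")
      case True
      then have l: "length (take a xs) = a" by simp
      have "pslice k m (take a xs) (fscale c x) = fscale c (pslice k m (take a xs) x)"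
        using lin_onD2[OF lin_pslice] by simp
      then show ?thesis using True lin_onD2[OF L] pslice_tprod[OF Zs Zt x l]
        by (simp add: id_tensor_alt del: mem_idx)
    qed (simp add: id_tensor_alt del: mem_idx)
  qed
qed

lemma J_image: assumes Y: "Y \<subseteq> tens k a" shows "J ` tprod a Y Z \<subseteq> tprod a Y Z'"
proof -
  have "J ` fv.span {outer a f h |f h. f \<in> Y \<and> h \<in> Z} \<subseteq> tprod a Y Z'"
  proof (rule span_image_sub[OF tprod_subspace J_lin[of Y] _ _ tprod_subspace])
    show "{outer a f h |f h. f \<in> Y \<and> h \<in> Z} \<subseteq> tprod a Y Z" by (auto intro: outer_in_tprod)
    show "J ` {outer a f h |f h. f \<in> Y \<and> h \<in> Z} \<subseteq> tprod a Y Z'"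
    proof
      fix t assume "t \<in> J ` {outer a f h |f h. f \<in> Y \<and> h \<in> Z}"
      then obtain f h where t: "t = J (outer a f h)" "f \<in> Y" "h \<in> Z" by blast
      have "f \<in> tens k a" using Y t by blast
      then have "t = outer a f (L h)" using t J_outer by simp
      moreover have "L h \<in> Z'" using LZ t by blast
      ultimately show "t \<in> tprod a Y Z'" using t outer_in_tprod by blast
    qed
  qed
  then show ?thesis by (simp add: tprod_def)
qed

lemma J_equiv:
  assumes Y: "GL_stable k a Y" and Zg: "GL_stable k m Z" and e: "equiv_on k m n Z L"
  shows "equiv_on k (a+m) (a+n) (tprod a Y Z) J"
  unfolding equiv_on_def
proof (intro ballI)
  fix g t assume g: "g \<in> GL k" and t: "t \<in> tprod a Y Z"
  have st: "GL_stable k (a+m) (tprod a Y Z)" by (rule tprod_stable[OF Y Zg])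
  have "t \<in> tprod a Y Z \<and> J (rho k (a+m) g t) = rho k (a+n) g (J t)"
  proof (rule fv.span_induct[OF t[unfolded tprod_def], where P="\<lambda>t. t \<in> tprod a Y Z \<and> J (rho k (a+m) g t) = rho k (a+n) g (J t)"])
    show "fv.subspace {t. t \<in> tprod a Y Z \<and> J (rho k (a+m) g t) = rho k (a+n) g (J t)}"
      unfolding fv_subspace_iff
    proof (intro conjI ballI allI)
      have "J 0 = 0" using lin_on_zero[OF J_lin[of Y] tprod_subspace] .
      then show "0 \<in> {t. t \<in> tprod a Y Z \<and> J (rho k (a+m) g t) = rho k (a+n) g (J t)}"
        by (simp add: rho_zero fv.subspace_0[OF tprod_subspace])
    next
      fix x y assume x: "x \<in> {t. t \<in> tprod a Y Z \<and> J (rho k (a+m) g t) = rho k (a+n) g (J t)}"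
        and y: "y \<in> {t. t \<in> tprod a Y Z \<and> J (rho k (a+m) g t) = rho k (a+n) g (J t)}"
      have rx: "rho k (a+m) g x \<in> tprod a Y Z" "rho k (a+m) g y \<in> tprod a Y Z"
        using st g x y by (auto simp: GL_stable_def)
      show "x + y \<in> {t. t \<in> tprod a Y Z \<and> J (rho k (a+m) g t) = rho k (a+n) g (J t)}"
        using x y rx by (simp add: rho_add lin_onD1[OF J_lin[of Y]] fv.subspace_add[OF tprod_subspace])
    next
      fix c x assume x: "x \<in> {t. t \<in> tprod a Y Z \<and> J (rho k (a+m) g t) = rho k (a+n) g (J t)}"
      have rx: "rho k (a+m) g x \<in> tprod a Y Z"
        using st g x by (auto simp: GL_stable_def)
      show "fscale c x \<in> {t. t \<in> tprod a Y Z \<and> J (rho k (a+m) g t) = rho k (a+n) g (J t)}"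
        using x rx by (simp add: rho_scale lin_onD2[OF J_lin[of Y]] fv.subspace_scale[OF tprod_subspace])
    qed
  next
    fix t assume "t \<in> {outer a f h |f h. f \<in> Y \<and> h \<in> Z}"
    then obtain f h where t: "t = outer a f h" "f \<in> Y" "h \<in> Z" by blast
    have ft: "f \<in> tens k a" "rho k a g f \<in> tens k a" using Y t by (auto simp: GL_stable_def rho_tens)
    have rh: "rho k m g h \<in> Z" using Zg g t by (auto simp: GL_stable_def)
    have "J (rho k (a+m) g t) = outer a (rho k a g f) (L (rho k m g h))"
      using t rho_outer J_outer[OF ft(2) rh] by simp
    also have "\<dots> = outer a (rho k a g f) (rho k n g (L h))" using e g t by (simp add: equiv_on_def)
    also have "\<dots> = rho k (a+n) g (J t)" using t J_outer[OF ft(1) t(3)] rho_outer by simp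
    finally show "t \<in> tprod a Y Z \<and> J (rho k (a+m) g t) = rho k (a+n) g (J t)"
      using t outer_in_tprod by blast
  qed
  then show "J (rho k (a+m) g t) = rho k (a+n) g (J t)" by blast
qed

lemma J_inj:
  assumes Y: "Y \<subseteq> tens k a" and inj: "\<forall>z\<in>Z. L z = 0 \<longrightarrow> z = 0"
  shows "inj_on J (tprod a Y Z)"
proof (rule inj_from_kernel[OF tprod_subspace J_lin], intro ballI impI)
  fix t assume t: "t \<in> tprod a Y Z" and J0: "J t = 0"
  have tt: "t \<in> tens k (a+m)" using tprod_tens[OF Y Zt] t by blast
  show "t = 0"
  proof (rule tens_eqI[OF tt fv.subspace_0[OF tens_subspace]])
    fix xs assume xs: "xs \<in> idx k (a+m)"
    let ?p = "take a xs"
    have l: "length ?p = a" using xs by simp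
    have pz: "pslice k m ?p t \<in> Z" by (rule pslice_tprod[OF Zs Zt t l])
    have Lp: "L (pslice k m ?p t) \<in> tens k n" using LZ Z't pz by blast
    have "L (pslice k m ?p t) = 0"
    proof (rule tens_eqI[OF Lp fv.subspace_0[OF tens_subspace]])
      fix zs assume zs: "zs \<in> idx k n"
      have "J t (?p @ zs) = 0" using J0 by simp
      moreover have "?p @ zs \<in> idx k (a+n)" using take_idx[OF xs] zs by (rule app_idx)
      ultimately show "L (pslice k m ?p t) zs = 0 zs" using l by (simp add: id_tensor_alt del: mem_idx)
    qed
    then have "pslice k m ?p t = 0" using inj pz by blast
    then have "pslice k m ?p t (drop a xs) = 0" by simp
    then show "t xs = 0 xs" using drop_idx[OF xs] by (simp add: pslice_def del: mem_idx)
  qed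
qed

end

locale qmap =
  fixes k m n b :: nat and L :: "(nat list \<Rightarrow> complex) \<Rightarrow> (nat list \<Rightarrow> complex)" and Z Z' :: "(nat list \<Rightarrow> complex) set"
  assumes Zs: "fv.subspace Z" and Zt: "Z \<subseteq> tens k m" and L: "lin_on Z L" and LZ: "L ` Z \<subseteq> Z'"
    and Z's: "fv.subspace Z'" and Z't: "Z' \<subseteq> tens k n"
begin

abbreviation "Q \<equiv> tensor_id k m n b L"

lemma Q_outer: "x \<in> Z \<Longrightarrow> s \<in> tens k b \<Longrightarrow> Q (outer m x s) = outer n (L x) s"
proof
  fix xs assume x: "x \<in> Z" and s: "s \<in> tens k b"
  have Lx: "L x \<in> tens k n" using LZ Z't x by blast
  show "Q (outer m x s) xs = outer n (L x) s xs"
  proof (cases "xs \<in> idx k (n+b)")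
    case True
    then show ?thesis using True x Zt lin_onD2[OF L x]
      by (auto simp: tensor_id_alt sslice_outer outer_apply mult.commute simp del: mem_idx)
  next
    case False
    then show ?thesis using outer_tens[OF Lx s] tensD by (auto simp: tensor_id_alt simp del: mem_idx)
  qed
qed

lemma Q_lin: "Y \<subseteq> Z \<Longrightarrow> fv.subspace Y \<Longrightarrow> lin_on (tprod m Y S) Q"
  unfolding lin_on_def
proof (intro conjI ballI allI)
  assume YZ: "Y \<subseteq> Z" and Ys: "fv.subspace Y"
  have Yt: "Y \<subseteq> tens k m" using YZ Zt by blast
  fix x y assume x: "x \<in> tprod m Y S" and y: "y \<in> tprod m Y S"
  show "Q (x + y) = Q x + Q y"
  proof
    fix xs
    have e: "sslice k m (drop n xs) (x+y) = sslice k m (drop n xs) x + sslice k m (drop n xs) y"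
      using lin_onD1[OF lin_sslice] by simp
    have xZ: "sslice k m (drop n xs) x \<in> Z" using sslice_tprod[OF Ys Yt x] YZ by blast
    have yZ: "sslice k m (drop n xs) y \<in> Z" using sslice_tprod[OF Ys Yt y] YZ by blast
    show "Q (x + y) xs = (Q x + Q y) xs"
      unfolding tensor_id_alt plus_fun_apply e lin_onD1[OF L xZ yZ] by simp
  qed
next
  assume YZ: "Y \<subseteq> Z" and Ys: "fv.subspace Y"
  have Yt: "Y \<subseteq> tens k m" using YZ Zt by blast
  fix c x assume x: "x \<in> tprod m Y S"
  show "Q (fscale c x) = fscale c (Q x)"
  proof
    fix xs
    have e: "sslice k m (drop n xs) (fscale c x) = fscale c (sslice k m (drop n xs) x)"
      using lin_onD2[OF lin_sslice] by simp
    have xZ: "sslice k m (drop n xs) x \<in> Z" using sslice_tprod[OF Ys Yt x] YZ by blast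
    show "Q (fscale c x) xs = fscale c (Q x) xs"
      unfolding tensor_id_alt e lin_onD2[OF L xZ] by simp
  qed
qed

lemma Q_image: assumes YZ: "Y \<subseteq> Z" and Ys: "fv.subspace Y" and S: "S \<subseteq> tens k b" and LY: "L ` Y \<subseteq> Y'"
  shows "Q ` tprod m Y S \<subseteq> tprod n Y' S"
proof -
  have "Q ` fv.span {outer m f h |f h. f \<in> Y \<and> h \<in> S} \<subseteq> tprod n Y' S"
  proof (rule span_image_sub[OF tprod_subspace Q_lin[OF YZ Ys, of S] _ _ tprod_subspace])
    show "{outer m f h |f h. f \<in> Y \<and> h \<in> S} \<subseteq> tprod m Y S" by (auto intro: outer_in_tprod)
    show "Q ` {outer m f h |f h. f \<in> Y \<and> h \<in> S} \<subseteq> tprod n Y' S"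
    proof
      fix t assume "t \<in> Q ` {outer m f h |f h. f \<in> Y \<and> h \<in> S}"
      then obtain f h where t: "t = Q (outer m f h)" "f \<in> Y" "h \<in> S" by blast
      have "f \<in> Z" "h \<in> tens k b" using YZ S t by auto
      then have "t = outer n (L f) h" using t Q_outer by simp
      moreover have "L f \<in> Y'" using LY t by blast
      ultimately show "t \<in> tprod n Y' S" using t outer_in_tprod by blast
    qed
  qed
  then show ?thesis by (simp add: tprod_def)
qed

lemma Q_equiv:
  assumes YZ: "Y \<subseteq> Z" and Y: "GL_stable k m Y" and Sg: "GL_stable k b S" and e: "equiv_on k m n Y L"
  shows "equiv_on k (m+b) (n+b) (tprod m Y S) Q"
  unfolding equiv_on_def
proof (intro ballI)
  fix g t assume g: "g \<in> GL k" and t: "t \<in> tprod m Y S"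
  have st: "GL_stable k (m+b) (tprod m Y S)" by (rule tprod_stable[OF Y Sg])
  have Ys: "fv.subspace Y" using Y by (simp add: GL_stable_def)
  note QL = Q_lin[OF YZ Ys, of S]
  have "t \<in> tprod m Y S \<and> Q (rho k (m+b) g t) = rho k (n+b) g (Q t)"
  proof (rule fv.span_induct[OF t[unfolded tprod_def], where P="\<lambda>t. t \<in> tprod m Y S \<and> Q (rho k (m+b) g t) = rho k (n+b) g (Q t)"])
    show "fv.subspace {t. t \<in> tprod m Y S \<and> Q (rho k (m+b) g t) = rho k (n+b) g (Q t)}"
      unfolding fv_subspace_iff
    proof (intro conjI ballI allI)
      have "Q 0 = 0" using lin_on_zero[OF QL tprod_subspace] .
      then show "0 \<in> {t. t \<in> tprod m Y S \<and> Q (rho k (m+b) g t) = rho k (n+b) g (Q t)}"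
        by (simp add: rho_zero fv.subspace_0[OF tprod_subspace])
    next
      fix x y assume x: "x \<in> {t. t \<in> tprod m Y S \<and> Q (rho k (m+b) g t) = rho k (n+b) g (Q t)}"
        and y: "y \<in> {t. t \<in> tprod m Y S \<and> Q (rho k (m+b) g t) = rho k (n+b) g (Q t)}"
      have rx: "rho k (m+b) g x \<in> tprod m Y S" "rho k (m+b) g y \<in> tprod m Y S"
        using st g x y by (auto simp: GL_stable_def)
      show "x + y \<in> {t. t \<in> tprod m Y S \<and> Q (rho k (m+b) g t) = rho k (n+b) g (Q t)}"
        using x y rx by (simp add: rho_add lin_onD1[OF QL] fv.subspace_add[OF tprod_subspace])
    next
      fix c x assume x: "x \<in> {t. t \<in> tprod m Y S \<and> Q (rho k (m+b) g t) = rho k (n+b) g (Q t)}"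
      have rx: "rho k (m+b) g x \<in> tprod m Y S"
        using st g x by (auto simp: GL_stable_def)
      show "fscale c x \<in> {t. t \<in> tprod m Y S \<and> Q (rho k (m+b) g t) = rho k (n+b) g (Q t)}"
        using x rx by (simp add: rho_scale lin_onD2[OF QL] fv.subspace_scale[OF tprod_subspace])
    qed
  next
    fix t assume "t \<in> {outer m f h |f h. f \<in> Y \<and> h \<in> S}"
    then obtain f h where t: "t = outer m f h" "f \<in> Y" "h \<in> S" by blast
    have ht: "h \<in> tens k b" "rho k b g h \<in> tens k b" using Sg t by (auto simp: GL_stable_def rho_tens)
    have rf: "rho k m g f \<in> Y" using Y g t by (auto simp: GL_stable_def)
    have "Q (rho k (m+b) g t) = outer n (L (rho k m g f)) (rho k b g h)"
      using t rho_outer Q_outer[OF _ ht(2)] rf YZ by auto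
    also have "\<dots> = outer n (rho k n g (L f)) (rho k b g h)" using e g t by (simp add: equiv_on_def)
    also have "\<dots> = rho k (n+b) g (Q t)" using t Q_outer[OF _ ht(1)] YZ rho_outer by auto
    finally show "t \<in> tprod m Y S \<and> Q (rho k (m+b) g t) = rho k (n+b) g (Q t)"
      using t outer_in_tprod by blast
  qed
  then show "Q (rho k (m+b) g t) = rho k (n+b) g (Q t)" by blast
qed

lemma Q_inj:
  assumes YZ: "Y \<subseteq> Z" and Ys: "fv.subspace Y" and S: "S \<subseteq> tens k b" and inj: "\<forall>z\<in>Y. L z = 0 \<longrightarrow> z = 0"
  shows "inj_on Q (tprod m Y S)"
proof (rule inj_from_kernel[OF tprod_subspace Q_lin[OF YZ Ys]], intro ballI impI)
  have Yt: "Y \<subseteq> tens k m" using YZ Zt by blast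
  fix t assume t: "t \<in> tprod m Y S" and Q0: "Q t = 0"
  have tt: "t \<in> tens k (m+b)" using tprod_tens[OF Yt S] t by blast
  show "t = 0"
  proof (rule tens_eqI[OF tt fv.subspace_0[OF tens_subspace]])
    fix xs assume xs: "xs \<in> idx k (m+b)"
    let ?q = "drop m xs"
    have q: "?q \<in> idx k b" using drop_idx[OF xs] .
    have pz: "sslice k m ?q t \<in> Y" by (rule sslice_tprod[OF Ys Yt t])
    have Lp: "L (sslice k m ?q t) \<in> tens k n" using LZ Z't pz YZ by blast
    have "L (sslice k m ?q t) = 0"
    proof (rule tens_eqI[OF Lp fv.subspace_0[OF tens_subspace]])
      fix zs assume zs: "zs \<in> idx k n"
      have "Q t (zs @ ?q) = 0" using Q0 by simp
      moreover have "zs @ ?q \<in> idx k (n+b)" using zs q by (rule app_idx)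
      moreover have "length zs = n" using zs by simp
      ultimately show "L (sslice k m ?q t) zs = 0 zs" by (simp add: tensor_id_alt del: mem_idx)
    qed
    then have "sslice k m ?q t = 0" using inj pz by blast
    then have "sslice k m ?q t (take m xs) = 0" by simp
    then show "t xs = 0 xs" using take_idx[OF xs] by (simp add: sslice_def del: mem_idx)
  qed
qed

end

definition sw :: "nat \<Rightarrow> nat \<Rightarrow> nat \<Rightarrow> (nat list \<Rightarrow> complex) \<Rightarrow> (nat list \<Rightarrow> complex)" where
  "sw k a b t = (\<lambda>xs. if xs \<in> idx k (a+b) then t (drop a xs @ take a xs) else 0)"

lemma lin_sw: "lin_on UNIV (sw k a b)"
  by (auto simp: lin_on_def sw_def fun_eq_iff simp del: mem_idx)

lemma sw_outer:
  assumes f: "f \<in> tens k a" and h: "h \<in> tens k b"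
  shows "sw k a b (outer b h f) = outer a f h"
proof
  fix xs show "sw k a b (outer b h f) xs = outer a f h xs"
  proof (cases "xs \<in> idx k (a+b)")
    case True
    then have "length (drop a xs) = b" by simp
    then show ?thesis using True by (simp add: sw_def outer_apply mult.commute del: mem_idx)
  next
    case False then show ?thesis using outer_tens[OF f h] tensD by (simp add: sw_def del: mem_idx)
  qed
qed

lemma sw_image:
  assumes F: "fv.subspace F" "F \<subseteq> tens k a" and H: "fv.subspace H" "H \<subseteq> tens k b"
  shows "sw k a b ` tprod b H F = tprod a F H"
proof
  show "sw k a b ` tprod b H F \<subseteq> tprod a F H"
    unfolding tprod_def[of b]
  proof (rule span_image_sub[OF fv.subspace_UNIV lin_sw _ _ tprod_subspace])
    show "sw k a b ` {outer b f h |f h. f \<in> H \<and> h \<in> F} \<subseteq> tprod a F H"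
    proof
      fix t assume "t \<in> sw k a b ` {outer b f h |f h. f \<in> H \<and> h \<in> F}"
      then obtain f h where t: "t = sw k a b (outer b f h)" "f \<in> H" "h \<in> F" by blast
      have "f \<in> tens k b" "h \<in> tens k a" using F H t by auto
      then have "t = outer a h f" using t sw_outer by simp
      then show "t \<in> tprod a F H" using t outer_in_tprod by blast
    qed
  qed simp
  show "tprod a F H \<subseteq> sw k a b ` tprod b H F"
    unfolding tprod_def[of a]
  proof (rule fv.span_minimal)
    show "fv.subspace (sw k a b ` tprod b H F)"
      by (rule image_subspace[OF tprod_subspace lin_on_subset[OF lin_sw]]) simp
    show "{outer a f h |f h. f \<in> F \<and> h \<in> H} \<subseteq> sw k a b ` tprod b H F"
    proof
      fix t assume "t \<in> {outer a f h |f h. f \<in> F \<and> h \<in> H}"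
      then obtain f h where t: "t = outer a f h" "f \<in> F" "h \<in> H" by blast
      have "f \<in> tens k a" "h \<in> tens k b" using F H t by auto
      then have "t = sw k a b (outer b h f)" using t sw_outer by simp
      then show "t \<in> sw k a b ` tprod b H F" using t outer_in_tprod by blast
    qed
  qed
qed

lemma sw_equiv:
  assumes F: "GL_stable k a F" and H: "GL_stable k b H"
  shows "equiv_on k (b+a) (a+b) (tprod b H F) (sw k a b)"
  unfolding equiv_on_def
proof (intro ballI)
  fix g t assume g: "g \<in> GL k" and t: "t \<in> tprod b H F"
  have "sw k a b (rho k (b+a) g t) = rho k (a+b) g (sw k a b t)"
  proof (rule fv.span_induct[OF t[unfolded tprod_def], where P="\<lambda>t. sw k a b (rho k (b+a) g t) = rho k (a+b) g (sw k a b t)"])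
    show "fv.subspace {t. sw k a b (rho k (b+a) g t) = rho k (a+b) g (sw k a b t)}"
      unfolding fv_subspace_iff
      using lin_on_zero[OF lin_sw fv.subspace_UNIV] lin_onD1[OF lin_sw] lin_onD2[OF lin_sw]
      by (simp add: rho_zero rho_add rho_scale)
  next
    fix t assume "t \<in> {outer b h f |h f. h \<in> H \<and> f \<in> F}"
    then obtain f h where t: "t = outer b h f" "f \<in> F" "h \<in> H" by blast
    have ft: "f \<in> tens k a" "h \<in> tens k b" using F H t by (auto simp: GL_stable_def)
    show "sw k a b (rho k (b+a) g t) = rho k (a+b) g (sw k a b t)"
      using t by (simp add: rho_outer sw_outer[OF rho_tens rho_tens] sw_outer[OF ft])
  qed
  then show "sw k a b (rho k (b+a) g t) = rho k (a+b) g (sw k a b t)" .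
qed

lemma sw_inj:
  assumes F: "F \<subseteq> tens k a" and H: "H \<subseteq> tens k b"
  shows "inj_on (sw k a b) (tprod b H F)"
proof (rule inj_from_kernel[OF tprod_subspace lin_on_subset[OF lin_sw]], simp, intro ballI impI)
  fix t assume t: "t \<in> tprod b H F" and z: "sw k a b t = 0"
  have tt: "t \<in> tens k (b+a)" using tprod_tens[OF H F] t by blast
  show "t = 0"
  proof (rule tens_eqI[OF tt fv.subspace_0[OF tens_subspace]])
    fix ys assume ys: "ys \<in> idx k (b+a)"
    let ?xs = "drop b ys @ take b ys"
    have xs: "?xs \<in> idx k (a+b)" using drop_idx[OF ys] take_idx[OF ys] by (rule app_idx)
    have l: "length (drop b ys) = a" using ys by simp
    have "sw k a b t ?xs = 0" using z by simp
    then show "t ys = 0 ys" using xs l by (simp add: sw_def del: mem_idx)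
  qed
qed

lemma dim_hwv_swap:
  assumes F: "GL_stable k a F" and H: "GL_stable k b H"
  shows "fv.dim (hwv k (a+b) (tprod a F H) \<pi>) = fv.dim (hwv k (b+a) (tprod b H F) \<pi>)"
proof -
  have Fs: "fv.subspace F" "F \<subseteq> tens k a" and Hs: "fv.subspace H" "H \<subseteq> tens k b"
    using F H by (auto simp: GL_stable_def)
  have "fv.dim (hwv k (a+b) (sw k a b ` tprod b H F) \<pi>) = fv.dim (hwv k (b+a) (tprod b H F) \<pi>)"
    by (rule dim_hwv_inj[OF tprod_stable[OF H F] lin_on_subset[OF lin_sw] sw_equiv[OF F H] sw_inj[OF Fs(2) Hs(2)]]) simp
  then show ?thesis using sw_image[OF Fs Hs] by simp
qed



definition ip :: "nat \<Rightarrow> nat \<Rightarrow> (nat list \<Rightarrow> complex) \<Rightarrow> (nat list \<Rightarrow> complex) \<Rightarrow> complex" where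
  "ip k n u v = (\<Sum>xs\<in>idx k n. u xs * cnj (v xs))"

lemma ip_add1: "ip k n (u + u') v = ip k n u v + ip k n u' v"
  by (simp add: ip_def distrib_right sum.distrib)
lemma ip_add2: "ip k n u (v + v') = ip k n u v + ip k n u v'"
  by (simp add: ip_def distrib_left sum.distrib)
lemma ip_scale1: "ip k n (fscale c u) v = c * ip k n u v"
  by (simp add: ip_def sum_distrib_left mult.assoc)
lemma ip_scale2: "ip k n u (fscale c v) = cnj c * ip k n u v"
  by (simp add: ip_def sum_distrib_left mult_ac)
lemma ip_zero1: "ip k n 0 v = 0" by (simp add: ip_def)
lemma ip_zero2: "ip k n u 0 = 0" by (simp add: ip_def)
lemma ip_diff1: "ip k n (u - u') v = ip k n u v - ip k n u' v"
  by (simp add: ip_def left_diff_distrib sum_subtractf)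

lemma ip_self:
  assumes u: "u \<in> tens k n" and z: "ip k n u u = 0"
  shows "u = 0"
proof -
  define S where "S = (\<Sum>xs\<in>idx k n. (cmod (u xs))\<^sup>2)"
  have h: "ip k n u u = of_real S"
    unfolding S_def ip_def of_real_sum complex_norm_square by simp
  have "complex_of_real S = 0" using h z by metis
  then have s: "(\<Sum>xs\<in>idx k n. (cmod (u xs))\<^sup>2) = 0" unfolding S_def by (metis of_real_eq_0_iff)
  have "\<forall>xs\<in>idx k n. (cmod (u xs))\<^sup>2 = 0"
    using s sum_nonneg_eq_0_iff[of "idx k n" "\<lambda>xs. (cmod (u xs))\<^sup>2"] by simp
  then show ?thesis
    by (intro tens_eqI[OF u fv.subspace_0[OF tens_subspace]]) auto
qed

lemma ip_span:
  assumes o: "\<forall>y\<in>F. ip k n u y = 0" and y: "y \<in> fv.span F"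
  shows "ip k n u y = 0"
proof (rule fv.span_induct[OF y, where P="\<lambda>y. ip k n u y = 0"])
  show "fv.subspace {y. ip k n u y = 0}"
    unfolding fv_subspace_iff by (simp add: ip_zero2 ip_add2 ip_scale2)
qed (use o in auto)

lemma span_tens: "F \<subseteq> tens k n \<Longrightarrow> fv.span F \<subseteq> tens k n"
  by (rule fv.span_minimal[OF _ tens_subspace])

lemma proj_exists:
  assumes "finite F" "F \<subseteq> tens k n"
  shows "\<exists>\<kappa>\<in>fv.span F. \<forall>y\<in>F. ip k n (x - \<kappa>) y = 0"
  using assms
proof (induction F arbitrary: x rule: finite_induct)
  case empty then show ?case using fv.span_zero by blast
next
  case (insert v F)
  have Ft: "F \<subseteq> tens k n" and vt: "v \<in> tens k n" using insert.prems by auto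
  obtain kx where kx: "kx \<in> fv.span F" "\<forall>y\<in>F. ip k n (x - kx) y = 0" using insert.IH[OF Ft] by blast
  obtain kv where kv: "kv \<in> fv.span F" "\<forall>y\<in>F. ip k n (v - kv) y = 0" using insert.IH[OF Ft] by blast
  define v' where "v' = v - kv"
  have spm: "fv.span F \<subseteq> fv.span (insert v F)" by (rule fv.span_mono) auto
  have v'sp: "v' \<in> fv.span (insert v F)" unfolding v'_def
    using spm kv(1) by (intro fv.span_diff) (auto intro: fv.span_base)
  have ox: "ip k n (x - kx) y = 0" if "y \<in> fv.span F" for y using ip_span[OF kx(2) that] .
  have ov: "ip k n v' y = 0" if "y \<in> fv.span F" for y using ip_span[OF kv(2) that] unfolding v'_def .
  have v't: "v' \<in> tens k n" unfolding v'_def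
    using vt span_tens[OF Ft] kv(1) by (intro fv.subspace_diff[OF tens_subspace]) auto
  show ?case
  proof (cases "ip k n v' v' = 0")
    case True
    then have "v' = 0" using ip_self[OF v't] by blast
    then have "v \<in> fv.span F" using kv(1) unfolding v'_def by simp
    then have vF: "v \<in> fv.span F" .
    show ?thesis
    proof (rule bexI[of _ kx])
      show "\<forall>y\<in>insert v F. ip k n (x - kx) y = 0"
      proof
        fix y assume "y \<in> insert v F"
        then have "y \<in> fv.span F" using vF by (auto intro: fv.span_base)
        then show "ip k n (x - kx) y = 0" by (rule ox)
      qed
      show "kx \<in> fv.span (insert v F)" using spm kx(1) by blast
    qed
  next
    case False
    define c where "c = ip k n (x - kx) v' / ip k n v' v'"
    have xk: "x - (kx + fscale c v') = (x - kx) + fscale (-c) v'" by (auto simp: fun_eq_iff)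
    have kin: "kx + fscale c v' \<in> fv.span (insert v F)"
      using spm kx(1) v'sp by (intro fv.span_add fv.span_scale) auto
    have vv: "v = v' + kv" unfolding v'_def by simp
    have "\<forall>y\<in>insert v F. ip k n (x - (kx + fscale c v')) y = 0"
    proof
      fix y assume y: "y \<in> insert v F"
      show "ip k n (x - (kx + fscale c v')) y = 0"
      proof (cases "y = v")
        case True
        have "ip k n (x - (kx + fscale c v')) y = ip k n (x - kx) v' + ip k n (x - kx) kv - c * (ip k n v' v' + ip k n v' kv)"
          unfolding xk True ip_add1 ip_scale1 by (subst (1 2) vv) (simp add: ip_add2 algebra_simps)
        also have "\<dots> = 0" using ox[OF kv(1)] ov[OF kv(1)] False by (simp add: c_def)
        finally show ?thesis .
      next
        case False
        then have yF: "y \<in> F" using y by auto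
        have "ip k n (x - (kx + fscale c v')) y = ip k n (x - kx) y - c * ip k n v' y"
          unfolding xk ip_add1 ip_scale1 by simp
        then show ?thesis using kx(2) yF ov[OF fv.span_base[OF yF]] by simp
      qed
    qed
    then show ?thesis using kin by blast
  qed
qed

definition adj :: "(nat \<Rightarrow> nat \<Rightarrow> complex) \<Rightarrow> nat \<Rightarrow> nat \<Rightarrow> complex" where
  "adj g = (\<lambda>i j. cnj (g j i))"

lemma adj_GL: assumes "g \<in> GL k" shows "adj g \<in> GL k"
proof -
  obtain h where h1: "\<forall>i<k. \<forall>j<k. (\<Sum>l<k. g i l * h l j) = (if i = j then 1 else 0)"
    and h2: "\<forall>i<k. \<forall>j<k. (\<Sum>l<k. h i l * g l j) = (if i = j then 1 else 0)"
    using assms by (auto simp: GL_def)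
  have a1: "(\<Sum>l<k. adj g i l * adj h l j) = (if i = j then 1 else 0)" if "i < k" "j < k" for i j
  proof -
    have "(\<Sum>l<k. adj g i l * adj h l j) = cnj (\<Sum>l<k. h j l * g l i)"
      by (simp add: adj_def mult.commute)
    also have "\<dots> = (if i = j then 1 else 0)" using h2 that by auto
    finally show ?thesis .
  qed
  have a2: "(\<Sum>l<k. adj h i l * adj g l j) = (if i = j then 1 else 0)" if "i < k" "j < k" for i j
  proof -
    have "(\<Sum>l<k. adj h i l * adj g l j) = cnj (\<Sum>l<k. g j l * h l i)"
      by (simp add: adj_def mult.commute)
    also have "\<dots> = (if i = j then 1 else 0)" using h1 that by auto
    finally show ?thesis .
  qed
  show ?thesis unfolding GL_def using a1 a2 by blast
qed

lemma ip_rho: "ip k n (rho k n g u) v = ip k n u (rho k n (adj g) v)"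
proof -
  have "ip k n (rho k n g u) v = (\<Sum>xs\<in>idx k n. \<Sum>js\<in>idx k n. (\<Prod>m<n. g (xs!m) (js!m)) * u js * cnj (v xs))"
    unfolding ip_def
    by (rule sum.cong[OF refl]) (simp add: rho_def sum_distrib_right del: mem_idx)
  also have "\<dots> = (\<Sum>js\<in>idx k n. \<Sum>xs\<in>idx k n. (\<Prod>m<n. g (xs!m) (js!m)) * u js * cnj (v xs))"
    by (rule sum.swap)
  also have "\<dots> = ip k n u (rho k n (adj g) v)"
    unfolding ip_def
    by (rule sum.cong[OF refl]) (simp add: rho_def adj_def sum_distrib_left mult_ac del: mem_idx)
  finally show ?thesis .
qed

lemma complement:
  assumes X: "GL_stable k N X" and K: "GL_stable k N K" and KX: "K \<subseteq> X"
  defines "W \<equiv> {x\<in>X. \<forall>\<kappa>\<in>K. ip k N x \<kappa> = 0}"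
  shows "GL_stable k N W" "\<forall>x\<in>X. \<exists>w\<in>W. \<exists>\<kappa>\<in>K. x = w + \<kappa>" "\<forall>w\<in>W. w \<in> K \<longrightarrow> w = 0"
proof -
  have Xs: "fv.subspace X" "X \<subseteq> tens k N" using X by (auto simp: GL_stable_def)
  have Ks: "fv.subspace K" "K \<subseteq> tens k N" using K by (auto simp: GL_stable_def)
  show "GL_stable k N W"
    unfolding GL_stable_def
  proof (intro conjI ballI)
    show "fv.subspace W" unfolding W_def fv_subspace_iff
      using Xs(1) by (auto simp: ip_zero1 ip_add1 ip_scale1 fv.subspace_0 fv.subspace_add fv.subspace_scale)
    show "W \<subseteq> tens k N" using Xs unfolding W_def by auto
    fix g w assume g: "g \<in> GL k" and w: "w \<in> W"
    have "rho k N g w \<in> X" using X g w by (auto simp: GL_stable_def W_def)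
    moreover have "ip k N (rho k N g w) \<kappa> = 0" if "\<kappa> \<in> K" for \<kappa>
    proof -
      have "rho k N (adj g) \<kappa> \<in> K" using K adj_GL[OF g] that by (auto simp: GL_stable_def)
      then show ?thesis using w by (simp add: ip_rho W_def)
    qed
    ultimately show "rho k N g w \<in> W" unfolding W_def by blast
  qed
  show "\<forall>x\<in>X. \<exists>w\<in>W. \<exists>\<kappa>\<in>K. x = w + \<kappa>"
  proof
    fix x assume x: "x \<in> X"
    obtain B where B: "B \<subseteq> K" "fv.independent B" "K \<subseteq> fv.span B" "card B = fv.dim K" "finite B"
      using fd_basis[OF Ks(2)] by blast
    obtain \<kappa> where k: "\<kappa> \<in> fv.span B" "\<forall>y\<in>B. ip k N (x - \<kappa>) y = 0"
      using proj_exists[OF B(5)] B(1) Ks(2) by blast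
    have kK: "\<kappa> \<in> K" using k(1) fv.span_minimal[OF B(1) Ks(1)] by blast
    have "x - \<kappa> \<in> W" unfolding W_def
      using x kK KX Xs(1) ip_span[OF k(2)] B(3) by (auto intro: fv.subspace_diff)
    then show "\<exists>w\<in>W. \<exists>\<kappa>\<in>K. x = w + \<kappa>" using kK by (intro bexI[of _ "x - \<kappa>"] bexI[of _ \<kappa>]) auto
  qed
  show "\<forall>w\<in>W. w \<in> K \<longrightarrow> w = 0"
    using ip_self Xs(2) unfolding W_def by blast
qed



lemma em_parts: "equivariant_map k a b D E L \<Longrightarrow> lin_on D L \<and> equiv_on k a b D L \<and> L ` D \<subseteq> E"
  by (auto simp: equivariant_map_def lin_on_def equiv_on_def)

lemma equiv_on_subset: "equiv_on k a b D L \<Longrightarrow> D' \<subseteq> D \<Longrightarrow> equiv_on k a b D' L"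
  by (auto simp: equiv_on_def)

lemma tprod_mono: "A \<subseteq> A' \<Longrightarrow> B \<subseteq> B' \<Longrightarrow> tprod a A B \<subseteq> tprod a A' B'"
  unfolding tprod_def by (rule fv.span_mono) blast

lemma lin_outer2: "lin_on UNIV (outer a f)"
  by (simp add: lin_on_def outer_add2 outer_scale2)

lemma tprod_assoc_sub: "tprod a F (tprod 1 G H) \<subseteq> tprod (a+1) (tprod a F G) H"
  unfolding tprod_def[of a F "tprod 1 G H"]
proof (rule fv.span_minimal[OF _ tprod_subspace], rule subsetI)
  fix t assume "t \<in> {outer a f h |f h. f \<in> F \<and> h \<in> tprod 1 G H}"
  then obtain f h where t: "t = outer a f h" "f \<in> F" "h \<in> tprod 1 G H" by blast
  have "outer a f ` tprod 1 G H \<subseteq> tprod (a+1) (tprod a F G) H"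
    unfolding tprod_def[of 1]
  proof (rule span_image_sub[OF fv.subspace_UNIV lin_outer2 _ _ tprod_subspace])
    show "outer a f ` {outer 1 v s |v s. v \<in> G \<and> s \<in> H} \<subseteq> tprod (a+1) (tprod a F G) H"
    proof
      fix u assume "u \<in> outer a f ` {outer 1 v s |v s. v \<in> G \<and> s \<in> H}"
      then obtain v s where u: "u = outer a f (outer 1 v s)" "v \<in> G" "s \<in> H" by blast
      then have "u = outer (a+1) (outer a f v) s" by (simp only: outer_assoc)
      then show "u \<in> tprod (a+1) (tprod a F G) H"
        using outer_in_tprod[OF outer_in_tprod[OF t(2) u(2)] u(3)] by simp
    qed
  qed simp
  then show "t \<in> tprod (a+1) (tprod a F G) H" using t by blast
qed

lemma kernel_stable:
  assumes D: "GL_stable k a D" and L: "lin_on D L" and e: "equiv_on k a b D L"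
  shows "GL_stable k a {x\<in>D. L x = 0}"
proof -
  have Ds: "fv.subspace D" "D \<subseteq> tens k a" using D by (auto simp: GL_stable_def)
  have L0: "L 0 = 0" by (rule lin_on_zero[OF L Ds(1)])
  show ?thesis unfolding GL_stable_def
  proof (intro conjI ballI)
    show "fv.subspace {x \<in> D. L x = 0}" unfolding fv_subspace_iff
      using Ds(1) L0 lin_onD1[OF L] lin_onD2[OF L]
      by (auto simp: fv.subspace_0 fv.subspace_add fv.subspace_scale)
    show "{x \<in> D. L x = 0} \<subseteq> tens k a" using Ds by auto
    fix g x assume g: "g \<in> GL k" and x: "x \<in> {x \<in> D. L x = 0}"
    have "rho k a g x \<in> D" using D g x by (auto simp: GL_stable_def)
    moreover have "L (rho k a g x) = 0" using e g x by (simp add: equiv_on_def rho_zero)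
    ultimately show "rho k a g x \<in> {x \<in> D. L x = 0}" by simp
  qed
qed

lemma main:
  fixes k m n M :: nat and \<pi> :: "nat \<Rightarrow> nat"
    and Smu Snu :: "(nat list \<Rightarrow> complex) set"
    and \<iota> P :: "(nat list \<Rightarrow> complex) \<Rightarrow> (nat list \<Rightarrow> complex)"
  assumes SmuG: "GL_stable k m Smu" and Snu: "irreducible_rep k n Snu"
    and \<iota>: "equivariant_map k n (1 + m) Snu (tprod 1 (tens k 1) Smu) \<iota>" and \<iota>nz: "\<exists>s\<in>Snu. \<iota> s \<noteq> 0"
    and P: "equivariant_map k (m + 1) n (tprod m Smu (tens k 1)) Snu P"
    and Pnz: "\<exists>s\<in>tprod m Smu (tens k 1). P s \<noteq> 0"
    and MA: "mult k (m + n) (tprod m Smu Snu) \<pi> = M"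
    and MB: "mult k (m + 1 + m) (tprod (m + 1) (tprod m Smu (tens k 1)) Smu) \<pi> = M"
  shows "mult k (n + m) ((\<lambda>t. tensor_id k (m + 1) n m P (id_tensor k m n (1 + m) \<iota> t)) ` tprod m Smu Snu) \<pi> = M"
proof -
  define V1 where "V1 = tens k 1"
  define X where "X = tprod m Smu V1"
  define Y1 where "Y1 = tprod 1 V1 Smu"
  define A where "A = tprod m Smu Snu"
  define B where "B = tprod (m+1) X Smu"
  define C where "C = tprod n Snu Smu"
  define J where "J = id_tensor k m n (1 + m) \<iota>"
  define Q where "Q = tensor_id k (m + 1) n m P"
  have SnuG: "GL_stable k n Snu" using Snu by (simp add: irreducible_rep_def)
  have Smus: "fv.subspace Smu" "Smu \<subseteq> tens k m" using SmuG by (auto simp: GL_stable_def)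
  have Snus: "fv.subspace Snu" "Snu \<subseteq> tens k n" using SnuG by (auto simp: GL_stable_def)
  have V1G: "GL_stable k 1 V1" unfolding V1_def by (rule GL_stable_tens)
  have XG: "GL_stable k (m+1) X" unfolding X_def by (rule tprod_stable[OF SmuG V1G])
  have Xs: "fv.subspace X" "X \<subseteq> tens k (m+1)" using XG by (auto simp: GL_stable_def)
  have Y1G: "GL_stable k (1+m) Y1" unfolding Y1_def by (rule tprod_stable[OF V1G SmuG])
  have Y1s: "fv.subspace Y1" "Y1 \<subseteq> tens k (1+m)" using Y1G by (auto simp: GL_stable_def)
  have AG: "GL_stable k (m+n) A" unfolding A_def by (rule tprod_stable[OF SmuG SnuG])
  have BG: "GL_stable k (m+1+m) B" unfolding B_def by (rule tprod_stable[OF XG SmuG])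
  have CG: "GL_stable k (n+m) C" unfolding C_def by (rule tprod_stable[OF SnuG SmuG])
  have Bt: "B \<subseteq> tens k (m+1+m)" and Ct: "C \<subseteq> tens k (n+m)" using BG CG by (auto simp: GL_stable_def)
  have \<iota>L: "lin_on Snu \<iota>" and \<iota>e: "equiv_on k n (1+m) Snu \<iota>" and \<iota>i: "\<iota> ` Snu \<subseteq> Y1"
    using em_parts[OF \<iota>] unfolding Y1_def V1_def by auto
  have PL: "lin_on X P" and Pe: "equiv_on k (m+1) n X P" and Pi: "P ` X \<subseteq> Snu"
    using em_parts[OF P] unfolding X_def V1_def by auto
  have \<iota>inj: "\<forall>s\<in>Snu. \<iota> s = 0 \<longrightarrow> s = 0"
  proof -
    have KG: "GL_stable k n {x\<in>Snu. \<iota> x = 0}" by (rule kernel_stable[OF SnuG \<iota>L \<iota>e])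
    then have "{x\<in>Snu. \<iota> x = 0} = {0} \<or> {x\<in>Snu. \<iota> x = 0} = Snu"
      using Snu by (auto simp: irreducible_rep_def)
    moreover have "{x\<in>Snu. \<iota> x = 0} \<noteq> Snu" using \<iota>nz by blast
    ultimately show ?thesis by blast
  qed
  have Ponto: "P ` X = Snu"
  proof -
    have "GL_stable k n (P ` X)" unfolding GL_stable_def
    proof (intro conjI ballI)
      show "fv.subspace (P ` X)" by (rule image_subspace[OF Xs(1) PL])
      show "P ` X \<subseteq> tens k n" using Pi Snus by blast
      fix g y assume g: "g \<in> GL k" and y: "y \<in> P ` X"
      then obtain x where x: "x \<in> X" "y = P x" by blast
      have "rho k n g y = P (rho k (m+1) g x)" using Pe g x by (simp add: equiv_on_def)
      moreover have "rho k (m+1) g x \<in> X" using XG g x by (auto simp: GL_stable_def)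
      ultimately show "rho k n g y \<in> P ` X" by blast
    qed
    then have "P ` X = {0} \<or> P ` X = Snu" using Snu Pi by (auto simp: irreducible_rep_def)
    moreover have "P ` X \<noteq> {0}" using Pnz unfolding X_def V1_def by blast
    ultimately show ?thesis by blast
  qed
  interpret jm: jmap k m n "1+m" \<iota> Snu Y1
    by unfold_locales (use Snus \<iota>L \<iota>i Y1s in auto)
  have JL: "lin_on A J" unfolding A_def J_def by (rule jm.J_lin)
  have JAB: "J ` A \<subseteq> B"
  proof -
    have "J ` A \<subseteq> tprod m Smu Y1" unfolding A_def J_def by (rule jm.J_image[OF Smus(2)])
    also have "\<dots> \<subseteq> B" unfolding B_def X_def Y1_def by (rule tprod_assoc_sub)
    finally show ?thesis .
  qed
  have mm: "m + (1 + m) = m + 1 + m" by simp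
  have Je: "equiv_on k (m+n) (m+1+m) A J"
    using jm.J_equiv[OF SmuG SnuG \<iota>e] unfolding A_def J_def mm .
  have Jinj: "inj_on J A" unfolding A_def J_def by (rule jm.J_inj[OF Smus(2) \<iota>inj])
  interpret qm: qmap k "m+1" n m P X Snu
    by unfold_locales (use Xs PL Pi Snus in auto)
  have QL: "lin_on B Q" unfolding B_def Q_def by (rule qm.Q_lin[OF order_refl Xs(1)])
  have QBC: "Q ` B \<subseteq> C" unfolding B_def C_def Q_def
    by (rule qm.Q_image[OF order_refl Xs(1) Smus(2) Pi])
  have Qe: "equiv_on k (m+1+m) (n+m) B Q" unfolding B_def Q_def
    by (rule qm.Q_equiv[OF order_refl XG SmuG Pe])
  define K where "K = {x\<in>X. P x = 0}"
  have KG: "GL_stable k (m+1) K" unfolding K_def by (rule kernel_stable[OF XG PL Pe])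
  define W where "W = {x\<in>X. \<forall>\<kappa>\<in>K. ip k (m+1) x \<kappa> = 0}"
  have KX: "K \<subseteq> X" unfolding K_def by auto
  note CC = complement[OF XG KG KX]
  have WG: "GL_stable k (m+1) W" unfolding W_def by (rule CC(1))
  have Wdec: "\<forall>x\<in>X. \<exists>w\<in>W. \<exists>\<kappa>\<in>K. x = w + \<kappa>" unfolding W_def by (rule CC(2))
  have WK: "\<forall>w\<in>W. w \<in> K \<longrightarrow> w = 0" unfolding W_def by (rule CC(3))
  have WX: "W \<subseteq> X" unfolding W_def by auto
  have Ws: "fv.subspace W" using WG by (simp add: GL_stable_def)
  have Pinj: "\<forall>w\<in>W. P w = 0 \<longrightarrow> w = 0" using WK WX unfolding K_def by blast
  define WS where "WS = tprod (m+1) W Smu"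
  have WSB: "WS \<subseteq> B" unfolding WS_def B_def by (rule tprod_mono[OF WX order_refl])
  have WSG: "GL_stable k (m+1+m) WS" unfolding WS_def by (rule tprod_stable[OF WG SmuG])
  have QLW: "lin_on WS Q" using QL WSB by (rule lin_on_subset)
  have QeW: "equiv_on k (m+1+m) (n+m) WS Q" using Qe WSB by (rule equiv_on_subset)
  have QinjW: "inj_on Q WS" unfolding WS_def Q_def by (rule qm.Q_inj[OF WX Ws Smus(2) Pinj])
  have QWS: "Q ` WS = C"
  proof
    show "Q ` WS \<subseteq> C" using QBC WSB by blast
    show "C \<subseteq> Q ` WS"
      unfolding C_def tprod_def[of n]
    proof (rule fv.span_minimal[OF _ image_subspace[OF tprod_subspace[of "m+1" W Smu, folded WS_def] QLW]], rule subsetI)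
      fix t assume "t \<in> {outer n z s |z s. z \<in> Snu \<and> s \<in> Smu}"
      then obtain z s where t: "t = outer n z s" "z \<in> Snu" "s \<in> Smu" by blast
      obtain x where x: "x \<in> X" "z = P x" using Ponto t by blast
      obtain w \<kappa> where wk: "w \<in> W" "\<kappa> \<in> K" "x = w + \<kappa>" using Wdec x by blast
      have "P x = P w + P \<kappa>" using wk WX K_def lin_onD1[OF PL] by auto
      then have "z = P w" using wk x K_def by simp
      moreover have "Q (outer (m+1) w s) = outer n (P w) s"
        unfolding Q_def using wk WX Smus t by (intro qm.Q_outer) auto
      ultimately have "t = Q (outer (m+1) w s)" using t by simp
      moreover have "outer (m+1) w s \<in> WS" unfolding WS_def using wk t outer_in_tprod by blast
      ultimately show "t \<in> Q ` WS" by blast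
    qed
  qed
  have dC: "fv.dim (hwv k (n+m) C \<pi>) = M"
    using dim_hwv_swap[OF SnuG SmuG, of \<pi>] MA unfolding C_def mult_def by simp
  have dWS: "fv.dim (hwv k (m+1+m) WS \<pi>) = M"
    using dim_hwv_inj[OF WSG QLW QeW QinjW, of \<pi>] QWS dC by simp
  have dB: "fv.dim (hwv k (m+1+m) B \<pi>) = M" using MB unfolding mult_def B_def X_def V1_def .
  have hBt: "hwv k (m+1+m) B \<pi> \<subseteq> tens k (m+1+m)" using hwv_sub Bt by blast
  have hWSB: "hwv k (m+1+m) WS \<pi> = hwv k (m+1+m) B \<pi>"
    by (rule dim_eq_sub[OF hwv_subspace[OF tprod_subspace[of "m+1" W Smu, folded WS_def]] hwv_mono[OF WSB] hBt])
       (simp only: dWS dB order_refl)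
  have dJ: "fv.dim (hwv k (m+1+m) (J ` A) \<pi>) = M"
    using dim_hwv_inj[OF AG JL Je Jinj, of \<pi>] MA unfolding mult_def A_def by simp
  have JAs: "fv.subspace (J ` A)" using image_subspace[OF tprod_subspace JL[unfolded A_def]] unfolding A_def .
  have hJB: "hwv k (m+1+m) (J ` A) \<pi> = hwv k (m+1+m) B \<pi>"
    by (rule dim_eq_sub[OF hwv_subspace[OF JAs] hwv_mono[OF JAB] hBt]) (simp only: dJ dB order_refl)
  define H where "H = hwv k (m+1+m) B \<pi>"
  have HWS: "H \<subseteq> WS" using hWSB hwv_sub unfolding H_def by blast
  have Hs: "fv.subspace H" unfolding H_def by (rule hwv_subspace[OF tprod_subspace[of "m+1" X Smu, folded B_def]])
  have QH: "Q ` H \<subseteq> hwv k (n+m) (Q ` J ` A) \<pi>"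
  proof -
    have "Q ` hwv k (m+1+m) (J ` A) \<pi> \<subseteq> hwv k (n+m) (Q ` J ` A) \<pi>"
      by (rule hwv_image[OF lin_on_subset[OF QL JAB] equiv_on_subset[OF Qe JAB]])
    then show ?thesis using hJB unfolding H_def by simp
  qed
  have dQH: "fv.dim (Q ` H) = M"
  proof -
    have "fv.dim (Q ` H) = fv.dim H"
      using HWS WSB Bt by (intro dim_inj_image[OF Hs, of k "m+1+m"] lin_on_subset[OF QL] inj_on_subset[OF QinjW]) auto
    then show ?thesis unfolding H_def using dB by simp
  qed
  have QJAC: "Q ` J ` A \<subseteq> C" using QBC JAB by blast
  have hCt: "hwv k (n+m) C \<pi> \<subseteq> tens k (n+m)" using hwv_sub Ct by blast
  have up: "fv.dim (hwv k (n+m) (Q ` J ` A) \<pi>) \<le> M"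
    using dim_mono_t[OF hwv_mono[OF QJAC] hCt] dC by simp
  have lo: "M \<le> fv.dim (hwv k (n+m) (Q ` J ` A) \<pi>)"
    using dim_mono_t[OF QH order_trans[OF hwv_mono[OF QJAC] hCt]] dQH by simp
  have "(\<lambda>t. tensor_id k (m + 1) n m P (id_tensor k m n (1 + m) \<iota> t)) ` tprod m Smu Snu = Q ` J ` A"
    unfolding Q_def J_def A_def by (simp add: image_image)
  then show ?thesis unfolding mult_def using up lo by simp
qed

theorem proposition2:
  fixes k M :: nat and \<mu> \<nu> \<pi> :: "nat \<Rightarrow> nat"
    and Smu Snu :: "(nat list \<Rightarrow> complex) set"
    and \<iota> P :: "(nat list \<Rightarrow> complex) \<Rightarrow> (nat list \<Rightarrow> complex)"
  assumes "partition_k k \<mu>" and "partition_k k \<nu>"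
    and "\<exists>j. \<nu> = \<mu>(j := Suc (\<mu> j))"
    and "schur_module k \<mu> Smu" and "schur_module k \<nu> Snu"
    and "equivariant_map k (psize k \<nu>) (1 + psize k \<mu>) Snu (tprod 1 (tens k 1) Smu) \<iota>"
    and "\<exists>s\<in>Snu. \<iota> s \<noteq> 0"
    and "equivariant_map k (psize k \<mu> + 1) (psize k \<nu>) (tprod (psize k \<mu>) Smu (tens k 1)) Snu P"
    and "\<exists>s\<in>tprod (psize k \<mu>) Smu (tens k 1). P s \<noteq> 0"
    and "mult k (psize k \<mu> + psize k \<nu>) (tprod (psize k \<mu>) Smu Snu) \<pi> = M"
    and "mult k (psize k \<mu> + 1 + psize k \<mu>)
           (tprod (psize k \<mu> + 1) (tprod (psize k \<mu>) Smu (tens k 1)) Smu) \<pi> = M"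
  shows "mult k (psize k \<nu> + psize k \<mu>)
           ((\<lambda>t. tensor_id k (psize k \<mu> + 1) (psize k \<nu>) (psize k \<mu>) P
                   (id_tensor k (psize k \<mu>) (psize k \<nu>) (1 + psize k \<mu>) \<iota> t))
              ` tprod (psize k \<mu>) Smu Snu) \<pi> = M"
proof (rule main)
  show "GL_stable k (psize k \<mu>) Smu" using assms(4) by (simp add: schur_module_def irreducible_rep_def)
  show "irreducible_rep k (psize k \<nu>) Snu" using assms(5) by (simp add: schur_module_def)
qed (use assms in auto)


end
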